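(* Let $X$ be a compact nonpositively curved cube complex and $(\tilde Y,\phi)$ a quasiline in $\tilde X$. Then: (1) there is a constant $D$ such that $\operatorname{diam}(H)\le D$ for every hyperplane $H$ of $\tilde Y$ that is not trivial; (2) there is a constant $K$ such that for every half-essential hyperplane $H$ of $\tilde Y$, its shallow halfspace $H^\epsilon$ satisfies $\operatorname{diam}(H^\epsilon)\le K$; (3) there is an integer $d$ such that for every essential hyperplane $H$ of $\tilde Y$, the hyperplanes $H$ and $\phi^d(H)$ do not intersect, and every hyperplane of $\tilde Y$ crossing both of them is trivial; (4) $\tilde Y$ has only finitely many trivial hyperplanes. The constants $K,D,d$ depend only on $(\tilde Y,\phi)$. Moreover, any constants $\overline D\ge D$, $\overline K\ge K$ and any integer $\overline d\ge d$ also satisfy (1), (2), (3) respectively.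
   Context: $\tilde X$ is the universal cover of $X$. A quasiline in $\tilde X$ is a pair $(\tilde Y,\phi)$ with $\tilde Y\subset\tilde X$ a convex subcomplex and $\phi\in\pi_1X$ nontrivial such that $\langle\phi\rangle$ acts cocompactly on $\tilde Y$. Hyperplanes of $\tilde Y$ and their halfspaces are taken in the CAT(0) cube complex $\tilde Y$. A halfspace of $H$ is deep if it contains points arbitrarily far from $H$, shallow otherwise. $H$ is essential if both halfspaces are deep, trivial if both are shallow, half-essential if exactly one is deep. *)

theory Defs
  imports Complex_Main
begin

text \<open>CAT(0) cube complexes are modelled combinatorially through their 1-skeleta,
  which are exactly the median graphs (Chepoi, Roller). Vertices form the type 'v,
  adjacency is adj, and all distances are combinatorial (graph) distances.\<close>

definition walk :: "('v \<Rightarrow> 'v \<Rightarrow> bool) \<Rightarrow> 'v \<Rightarrow> 'v \<Rightarrow> nat \<Rightarrow> bool" where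
  "walk adj x y n \<longleftrightarrow>
     (\<exists>p::nat \<Rightarrow> 'v. p 0 = x \<and> p n = y \<and> (\<forall>i<n. adj (p i) (p (Suc i))))"

definition gdist :: "('v \<Rightarrow> 'v \<Rightarrow> bool) \<Rightarrow> 'v \<Rightarrow> 'v \<Rightarrow> nat" where
  "gdist adj x y = (LEAST n. walk adj x y n)"

definition simple_graph :: "('v \<Rightarrow> 'v \<Rightarrow> bool) \<Rightarrow> bool" where
  "simple_graph adj \<longleftrightarrow> (\<forall>x y. adj x y \<longrightarrow> adj y x) \<and> (\<forall>x. \<not> adj x x)"

definition connected_graph :: "('v \<Rightarrow> 'v \<Rightarrow> bool) \<Rightarrow> bool" where
  "connected_graph adj \<longleftrightarrow> (\<forall>x y. \<exists>n. walk adj x y n)"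

definition interval :: "('v \<Rightarrow> 'v \<Rightarrow> bool) \<Rightarrow> 'v \<Rightarrow> 'v \<Rightarrow> 'v set" where
  "interval adj x y = {z. gdist adj x z + gdist adj z y = gdist adj x y}"

definition median_graph :: "('v \<Rightarrow> 'v \<Rightarrow> bool) \<Rightarrow> bool" where
  "median_graph adj \<longleftrightarrow> simple_graph adj \<and> connected_graph adj \<and>
     (\<forall>x y z. \<exists>!m. m \<in> interval adj x y \<inter> interval adj y z \<inter> interval adj x z)"

definition locally_finite :: "('v \<Rightarrow> 'v \<Rightarrow> bool) \<Rightarrow> bool" where
  "locally_finite adj \<longleftrightarrow> (\<forall>v. finite {w. adj v w})"

definition graph_aut :: "('v \<Rightarrow> 'v \<Rightarrow> bool) \<Rightarrow> ('v \<Rightarrow> 'v) \<Rightarrow> bool" where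
  "graph_aut adj g \<longleftrightarrow> bij g \<and> (\<forall>x y. adj (g x) (g y) \<longleftrightarrow> adj x y)"

text \<open>A group of automorphisms (the deck group, i.e. pi_1 X acting on the universal cover).\<close>
definition aut_group :: "('v \<Rightarrow> 'v \<Rightarrow> bool) \<Rightarrow> ('v \<Rightarrow> 'v) set \<Rightarrow> bool" where
  "aut_group adj G \<longleftrightarrow> id \<in> G \<and> (\<forall>g\<in>G. \<forall>h\<in>G. g \<circ> h \<in> G) \<and> (\<forall>g\<in>G. inv g \<in> G)
     \<and> (\<forall>g\<in>G. graph_aut adj g)"

text \<open>Free action on the cube complex: no nontrivial element fixes a point, equivalently
  no nontrivial element stabilises a nonempty finite set of vertices (e.g. a cube).\<close>
definition acts_freely :: "('v \<Rightarrow> 'v) set \<Rightarrow> bool" where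
  "acts_freely G \<longleftrightarrow>
     (\<forall>g\<in>G. g \<noteq> id \<longrightarrow> (\<forall>S. finite S \<and> S \<noteq> {} \<longrightarrow> g ` S \<noteq> S))"

definition finitely_many_orbits :: "('v \<Rightarrow> 'v) set \<Rightarrow> 'v set \<Rightarrow> bool" where
  "finitely_many_orbits G S \<longleftrightarrow>
     (\<exists>F. finite F \<and> F \<subseteq> S \<and> S \<subseteq> (\<Union>f\<in>F. (\<lambda>g. g f) ` G))"

text \<open>The universal cover of a compact nonpositively curved cube complex X, together
  with the action of pi_1 X by deck transformations: a locally finite CAT(0) cube complex
  with a free cocompact action.\<close>
definition univ_cover_of_compact_npc :: "('v \<Rightarrow> 'v \<Rightarrow> bool) \<Rightarrow> ('v \<Rightarrow> 'v) set \<Rightarrow> bool" where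
  "univ_cover_of_compact_npc adj G \<longleftrightarrow> median_graph adj \<and> locally_finite adj \<and>
     aut_group adj G \<and> acts_freely G \<and> finitely_many_orbits G UNIV"

definition convex_set :: "('v \<Rightarrow> 'v \<Rightarrow> bool) \<Rightarrow> 'v set \<Rightarrow> bool" where
  "convex_set adj Y \<longleftrightarrow> (\<forall>x\<in>Y. \<forall>y\<in>Y. interval adj x y \<subseteq> Y)"

definition fpow :: "('v \<Rightarrow> 'v) \<Rightarrow> int \<Rightarrow> ('v \<Rightarrow> 'v)" where
  "fpow g k = (if 0 \<le> k then g ^^ nat k else inv g ^^ nat (- k))"

definition cyclic_subgroup :: "('v \<Rightarrow> 'v) \<Rightarrow> ('v \<Rightarrow> 'v) set" where
  "cyclic_subgroup g = range (fpow g)"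

text \<open>Quasiline (Y, phi): Y convex subcomplex (given by its convex vertex set),
  phi nontrivial in pi_1 X, and the cyclic group generated by phi acts cocompactly on Y.\<close>
definition quasiline :: "('v \<Rightarrow> 'v \<Rightarrow> bool) \<Rightarrow> ('v \<Rightarrow> 'v) set \<Rightarrow> 'v set \<Rightarrow> ('v \<Rightarrow> 'v) \<Rightarrow> bool" where
  "quasiline adj G Y \<phi> \<longleftrightarrow> convex_set adj Y \<and> \<phi> \<in> G \<and> \<phi> \<noteq> id \<and> \<phi> ` Y = Y \<and>
     finitely_many_orbits (cyclic_subgroup \<phi>) Y"

definition edges_in :: "('v \<Rightarrow> 'v \<Rightarrow> bool) \<Rightarrow> 'v set \<Rightarrow> ('v \<times> 'v) set" where
  "edges_in adj Y = {(a, b). a \<in> Y \<and> b \<in> Y \<and> adj a b}"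

text \<open>Djokovic--Winkler relation: oriented edges dual to the same hyperplane.\<close>
definition theta :: "('v \<Rightarrow> 'v \<Rightarrow> bool) \<Rightarrow> 'v \<times> 'v \<Rightarrow> 'v \<times> 'v \<Rightarrow> bool" where
  "theta adj e f \<longleftrightarrow>
     gdist adj (fst e) (fst f) + gdist adj (snd e) (snd f) \<noteq>
     gdist adj (fst e) (snd f) + gdist adj (snd e) (fst f)"

text \<open>Hyperplanes of the cube complex spanned by Y, as the sets of (oriented) edges they cross.\<close>
definition hyperplanes :: "('v \<Rightarrow> 'v \<Rightarrow> bool) \<Rightarrow> 'v set \<Rightarrow> ('v \<times> 'v) set set" where
  "hyperplanes adj Y = {{f \<in> edges_in adj Y. theta adj e f} | e. e \<in> edges_in adj Y}"

definition halfspace :: "('v \<Rightarrow> 'v \<Rightarrow> bool) \<Rightarrow> 'v set \<Rightarrow> 'v \<times> 'v \<Rightarrow> 'v set" where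
  "halfspace adj Y e = {z \<in> Y. gdist adj z (fst e) < gdist adj z (snd e)}"

definition halfspaces :: "('v \<Rightarrow> 'v \<Rightarrow> bool) \<Rightarrow> 'v set \<Rightarrow> ('v \<times> 'v) set \<Rightarrow> 'v set set" where
  "halfspaces adj Y H = halfspace adj Y ` H"

definition carrier :: "('v \<times> 'v) set \<Rightarrow> 'v set" where
  "carrier H = fst ` H"

definition deep :: "('v \<Rightarrow> 'v \<Rightarrow> bool) \<Rightarrow> 'v set \<Rightarrow> ('v \<times> 'v) set \<Rightarrow> bool" where
  "deep adj W H \<longleftrightarrow> (\<forall>R::nat. \<exists>z\<in>W. \<forall>c\<in>carrier H. R \<le> gdist adj z c)"

definition essential_hyp :: "('v \<Rightarrow> 'v \<Rightarrow> bool) \<Rightarrow> 'v set \<Rightarrow> ('v \<times> 'v) set \<Rightarrow> bool" where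
  "essential_hyp adj Y H \<longleftrightarrow> (\<forall>W\<in>halfspaces adj Y H. deep adj W H)"

definition trivial_hyp :: "('v \<Rightarrow> 'v \<Rightarrow> bool) \<Rightarrow> 'v set \<Rightarrow> ('v \<times> 'v) set \<Rightarrow> bool" where
  "trivial_hyp adj Y H \<longleftrightarrow> (\<forall>W\<in>halfspaces adj Y H. \<not> deep adj W H)"

definition half_essential_hyp :: "('v \<Rightarrow> 'v \<Rightarrow> bool) \<Rightarrow> 'v set \<Rightarrow> ('v \<times> 'v) set \<Rightarrow> bool" where
  "half_essential_hyp adj Y H \<longleftrightarrow>
     (\<exists>W\<in>halfspaces adj Y H. deep adj W H) \<and> (\<exists>W\<in>halfspaces adj Y H. \<not> deep adj W H)"

definition diam_le :: "('v \<Rightarrow> 'v \<Rightarrow> bool) \<Rightarrow> 'v set \<Rightarrow> real \<Rightarrow> bool" where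
  "diam_le adj S D \<longleftrightarrow> (\<forall>x\<in>S. \<forall>y\<in>S. real (gdist adj x y) \<le> D)"

definition crosses :: "('v \<Rightarrow> 'v \<Rightarrow> bool) \<Rightarrow> 'v set \<Rightarrow> ('v \<times> 'v) set \<Rightarrow> ('v \<times> 'v) set \<Rightarrow> bool" where
  "crosses adj Y H H' \<longleftrightarrow>
     (\<forall>W\<in>halfspaces adj Y H. \<forall>W'\<in>halfspaces adj Y H'. W \<inter> W' \<noteq> {})"

definition hyp_intersect :: "('v \<Rightarrow> 'v \<Rightarrow> bool) \<Rightarrow> 'v set \<Rightarrow> ('v \<times> 'v) set \<Rightarrow> ('v \<times> 'v) set \<Rightarrow> bool" where
  "hyp_intersect adj Y H H' \<longleftrightarrow> H = H' \<or> crosses adj Y H H'"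

definition hyp_image :: "('v \<Rightarrow> 'v) \<Rightarrow> ('v \<times> 'v) set \<Rightarrow> ('v \<times> 'v) set" where
  "hyp_image g H = map_prod g g ` H"

end

theory Submission
  imports Defs
begin

lemma walk_refl: "walk adj x x 0"
  unfolding walk_def by (rule exI[of _ "\<lambda>_. x"]) auto

lemma walk_adj: "adj x y \<Longrightarrow> walk adj x y 1"
  unfolding walk_def by (rule exI[of _ "\<lambda>i. if i = 0 then x else y"]) auto

lemma walk_trans:
  assumes "walk adj x y m" "walk adj y z n" shows "walk adj x z (m + n)"
proof -
  obtain p where p: "p 0 = x" "p m = y" "\<forall>i<m. adj (p i) (p (Suc i))"
    using assms(1) unfolding walk_def by blast
  obtain q where q: "q 0 = y" "q n = z" "\<forall>i<n. adj (q i) (q (Suc i))"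
    using assms(2) unfolding walk_def by blast
  define r where "r i = (if i \<le> m then p i else q (i - m))" for i
  have "r 0 = x" using p by (simp add: r_def)
  moreover have "r (m + n) = z" using p q by (auto simp: r_def)
  moreover have "\<forall>i<m+n. adj (r i) (r (Suc i))"
  proof (intro allI impI)
    fix i assume i: "i < m + n"
    show "adj (r i) (r (Suc i))"
    proof (cases "i < m")
      case True then show ?thesis using p by (simp add: r_def)
    next
      case False
      then have "Suc i - m = Suc (i - m)" by auto
      then show ?thesis using False q p i
        by (cases "i = m") (auto simp: r_def)
    qed
  qed
  ultimately show ?thesis unfolding walk_def by blast
qed

lemma walk_sym:
  assumes "\<forall>x y. adj x y \<longrightarrow> adj y x" "walk adj x y n" shows "walk adj y x n"
proof -
  obtain p where p: "p 0 = x" "p n = y" "\<forall>i<n. adj (p i) (p (Suc i))"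
    using assms(2) unfolding walk_def by blast
  have "\<forall>i<n. adj ((\<lambda>i. p (n - i)) i) ((\<lambda>i. p (n - i)) (Suc i))"
  proof (intro allI impI)
    fix i assume i: "i < n"
    have k: "n - Suc i < n" using i by auto
    have eq: "n - i = Suc (n - Suc i)" using i by auto
    have "adj (p (n - Suc i)) (p (Suc (n - Suc i)))" using p(3) k by blast
    then have "adj (p (n - Suc i)) (p (n - i))" using eq by simp
    then show "adj ((\<lambda>i. p (n - i)) i) ((\<lambda>i. p (n - i)) (Suc i))"
      using assms(1) by simp
  qed
  then show ?thesis unfolding walk_def using p
    by (intro exI[of _ "\<lambda>i. p (n - i)"]) auto
qed

lemma walk_shift:
  assumes "walk adj x y (Suc n)" shows "\<exists>x'. adj x x' \<and> walk adj x' y n"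
proof -
  obtain p where p: "p 0 = x" "p (Suc n) = y" "\<forall>i<Suc n. adj (p i) (p (Suc i))"
    using assms unfolding walk_def by blast
  have "walk adj (p 1) y n" unfolding walk_def using p
    by (intro exI[of _ "\<lambda>i. p (Suc i)"]) auto
  then show ?thesis using p by force
qed

lemma walk_last:
  assumes "walk adj x y (Suc n)" shows "\<exists>y'. walk adj x y' n \<and> adj y' y"
proof -
  obtain p where p: "p 0 = x" "p (Suc n) = y" "\<forall>i<Suc n. adj (p i) (p (Suc i))"
    using assms unfolding walk_def by blast
  have "walk adj x (p n) n" unfolding walk_def using p
    by (intro exI[of _ p]) auto
  then show ?thesis using p by force
qed

lemma walk0: "walk adj x y 0 \<Longrightarrow> x = y"
  unfolding walk_def by auto

lemma walk1: "walk adj x y 1 \<Longrightarrow> adj x y"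
  unfolding walk_def by auto

locale mg =
  fixes adj :: "'v \<Rightarrow> 'v \<Rightarrow> bool"
  assumes med: "median_graph adj"
begin

abbreviation d where "d \<equiv> gdist adj"

lemma symadj: "adj x y \<Longrightarrow> adj y x"
  using med unfolding median_graph_def simple_graph_def by blast

lemma irr: "\<not> adj x x"
  using med unfolding median_graph_def simple_graph_def by blast

lemma conn: "\<exists>n. walk adj x y n"
  using med unfolding median_graph_def connected_graph_def by blast

lemma d_walk: "walk adj x y (d x y)"
  unfolding gdist_def using conn by (rule LeastI_ex)

lemma d_le: "walk adj x y n \<Longrightarrow> d x y \<le> n"
  unfolding gdist_def by (rule Least_le)

lemma d_refl[simp]: "d x x = 0"
  using d_le[OF walk_refl] by simp

lemma d_eq0: "d x y = 0 \<longleftrightarrow> x = y"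
  using d_walk[of x y] walk0 by fastforce

lemma d_sym: "d x y = d y x"
  using d_le[OF walk_sym[OF _ d_walk]] symadj
  by (metis le_antisym)

lemma d_tri: "d x z \<le> d x y + d y z"
  using d_le[OF walk_trans[OF d_walk d_walk]] .

lemma d_adj: "adj x y \<Longrightarrow> d x y = 1"
  using d_le[OF walk_adj, of x y] d_eq0[of x y] irr by fastforce

lemma d_one: "d x y = 1 \<Longrightarrow> adj x y"
  using d_walk[of x y] walk1 by simp

lemma d_step:
  assumes "d x z = Suc n" shows "\<exists>y. adj x y \<and> d y z = n"
proof -
  obtain y where y: "adj x y" "walk adj y z n" using walk_shift d_walk assms by metis
  have "d y z \<le> n" using d_le y by blast
  moreover have "d x z \<le> d x y + d y z" by (rule d_tri)
  ultimately show ?thesis using y d_adj assms by force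
qed

lemma d_adj_le: "adj x y \<Longrightarrow> d z y \<le> d z x + 1"
  using d_tri[of z y x] d_adj[of x y] by (simp add: d_sym)

lemma d_adj_le': "adj x y \<Longrightarrow> d y z \<le> d x z + 1"
  using d_adj_le by (simp add: d_sym)

lemma interval_mem: "z \<in> interval adj x y \<longleftrightarrow> d x z + d z y = d x y"
  unfolding interval_def by simp

lemma median_ex1: "\<exists>!m. m \<in> interval adj x y \<inter> interval adj y z \<inter> interval adj x z"
  using med unfolding median_graph_def by blast

lemma median_ex: "\<exists>m. d x m + d m y = d x y \<and> d y m + d m z = d y z \<and> d x m + d m z = d x z"
  using median_ex1[of x y z] unfolding interval_def by blast

lemma median_uniq:
  assumes "d x m + d m y = d x y" "d y m + d m z = d y z" "d x m + d m z = d x z"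
    and "d x m' + d m' y = d x y" "d y m' + d m' z = d y z" "d x m' + d m' z = d x z"
  shows "m = m'"
  using median_ex1[of x y z] assms unfolding interval_def by blast

lemma bip:
  assumes "adj a b" shows "d z b = d z a + 1 \<or> d z a = d z b + 1"
proof -
  obtain m where m: "d z m + d m a = d z a" "d a m + d m b = d a b" "d z m + d m b = d z b"
    using median_ex[of z a b] by blast
  have "d a b = 1" using d_adj assms by simp
  then have "d a m = 0 \<or> d m b = 0" using m(2) by arith
  then have "m = a \<or> m = b" using d_eq0 by (metis d_sym)
  then show ?thesis using m \<open>d a b = 1\<close> by (auto simp: d_sym)
qed

lemma bip_neq: assumes "adj a b" shows "d z a \<noteq> d z b"
  using bip[OF assms, of z] by auto

lemma QC:
  assumes "adj w x" "adj w y" "x \<noteq> y" "d z x = k" "d z y = k" "d z w = Suc k"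
  shows "\<exists>t. adj x t \<and> adj y t \<and> d z t + 1 = k"
proof -
  obtain t where t: "d x t + d t y = d x y" "d y t + d t z = d y z" "d x t + d t z = d x z"
    using median_ex[of x y z] by blast
  have "d x w = 1" using symadj[OF assms(1)] d_adj by blast
  moreover have "d w y = 1" using assms(2) d_adj by blast
  moreover have "d x y \<le> d x w + d w y" by (rule d_tri)
  ultimately have dxy2: "d x y \<le> 2" by simp
  have "d x y \<noteq> 0" using assms(3) d_eq0 by simp
  moreover have "d x y \<noteq> 1"
  proof
    assume "d x y = 1" then have "adj x y" by (rule d_one)
    then show False using bip_neq[of x y z] assms by simp
  qed
  ultimately have dxy: "d x y = 2" using dxy2 by arith
  have "t \<noteq> x"
  proof
    assume "t = x" then show False using t(2) dxy assms by (simp add: d_sym)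
  qed
  moreover have "t \<noteq> y"
  proof
    assume "t = y" then show False using t(3) dxy assms by (simp add: d_sym)
  qed
  ultimately have "d x t \<noteq> 0" "d t y \<noteq> 0" using d_eq0 by (auto simp: d_sym)
  then have "d x t = 1" "d t y = 1" using t(1) dxy by arith+
  moreover have "d x z = k" using assms(4) by (simp add: d_sym)
  ultimately have "d z t + 1 = k" using t(3) by (simp add: d_sym)
  moreover have "adj x t" using \<open>d x t = 1\<close> by (rule d_one)
  moreover have "adj y t" using \<open>d t y = 1\<close> d_one d_sym by metis
  ultimately show ?thesis by blast
qed

end

context mg
begin

definition Wv :: "'v \<Rightarrow> 'v \<Rightarrow> 'v set" where
  "Wv a b = {z. d z a < d z b}"

definition gp :: "(nat \<Rightarrow> 'v) \<Rightarrow> nat \<Rightarrow> 'v \<Rightarrow> 'v \<Rightarrow> bool" where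
  "gp p n u v \<longleftrightarrow> p 0 = u \<and> p n = v \<and> (\<forall>i<n. adj (p i) (p (Suc i))) \<and> d u v = n"

lemma gp_dist:
  assumes "gp p n u v" "i \<le> n" shows "d u (p i) = i" "d (p i) v = n - i"
proof -
  have p: "p 0 = u" "p n = v" "\<forall>i<n. adj (p i) (p (Suc i))" "d u v = n"
    using assms(1) unfolding gp_def by auto
  have w1: "walk adj u (p i) i" unfolding walk_def using p assms(2)
    by (intro exI[of _ p]) auto
  have w2: "walk adj (p i) v (n - i)" unfolding walk_def using p assms(2)
    by (intro exI[of _ "\<lambda>k. p (i + k)"]) auto
  have "d u (p i) \<le> i" "d (p i) v \<le> n - i" using d_le w1 w2 by auto
  moreover have "d u v \<le> d u (p i) + d (p i) v" by (rule d_tri)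
  ultimately show "d u (p i) = i" "d (p i) v = n - i" using p(4) assms(2) by arith+
qed

lemma gp_sub:
  assumes "gp p n u v" "j0 \<le> j1" "j1 \<le> n"
  shows "gp (\<lambda>k. p (j0 + k)) (j1 - j0) (p j0) (p j1)"
proof -
  have p: "p 0 = u" "p n = v" "\<forall>i<n. adj (p i) (p (Suc i))" "d u v = n"
    using assms(1) unfolding gp_def by auto
  have w: "walk adj (p j0) (p j1) (j1 - j0)" unfolding walk_def using p assms(2,3)
    by (intro exI[of _ "\<lambda>k. p (j0 + k)"]) auto
  have "d u (p j0) = j0" "d u (p j1) = j1" using gp_dist assms by auto
  moreover have "d u (p j1) \<le> d u (p j0) + d (p j0) (p j1)" by (rule d_tri)
  moreover have "d (p j0) (p j1) \<le> j1 - j0" using d_le w by blast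
  ultimately have "d (p j0) (p j1) = j1 - j0" by arith
  then show ?thesis unfolding gp_def using p assms(2,3) by auto
qed

lemma path_through:
  assumes "d u z + d z v = d u v"
  shows "\<exists>p. gp p (d u v) u v \<and> p (d u z) = z"
proof -
  let ?m = "d u z" and ?n = "d z v"
  obtain p where p: "p 0 = u" "p ?m = z" "\<forall>i<?m. adj (p i) (p (Suc i))"
    using d_walk[of u z] unfolding walk_def by blast
  obtain q where q: "q 0 = z" "q ?n = v" "\<forall>i<?n. adj (q i) (q (Suc i))"
    using d_walk[of z v] unfolding walk_def by blast
  define r where "r i = (if i \<le> ?m then p i else q (i - ?m))" for i
  have "r 0 = u" using p by (simp add: r_def)
  moreover have "r (?m + ?n) = v" using p q by (auto simp: r_def)
  moreover have "r ?m = z" using p by (simp add: r_def)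
  moreover have "\<forall>i<?m+?n. adj (r i) (r (Suc i))"
  proof (intro allI impI)
    fix i assume i: "i < ?m + ?n"
    show "adj (r i) (r (Suc i))"
    proof (cases "i < ?m")
      case True then show ?thesis using p by (simp add: r_def)
    next
      case False
      then have "Suc i - ?m = Suc (i - ?m)" by auto
      then show ?thesis using False q p i
        by (cases "i = ?m") (auto simp: r_def)
    qed
  qed
  ultimately show ?thesis unfolding gp_def using assms by (intro exI[of _ r]) auto
qed

lemma W_compl:
  assumes "adj a b" shows "z \<notin> Wv a b \<longleftrightarrow> z \<in> Wv b a"
  using bip[OF assms, of z] unfolding Wv_def by auto

lemma W_disj:
  "z \<in> Wv a b \<Longrightarrow> z \<notin> Wv b a"
  unfolding Wv_def by auto

lemma side_step:
  assumes ab: "adj a b" and xy: "adj x y" and x: "x \<in> Wv a b" and y: "y \<in> Wv b a"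
  shows "d y a = d x a + 1"
proof -
  have "d y a = d y b + 1" using bip[OF ab, of y] y unfolding Wv_def by auto
  moreover have "d x b = d x a + 1" using bip[OF ab, of x] x unfolding Wv_def by auto
  moreover have "d y a \<le> d x a + 1" using d_adj_le'[OF xy] .
  moreover have "d x b \<le> d y b + 1" using d_adj_le'[OF symadj[OF xy]] .
  ultimately show ?thesis by arith
qed

lemma conv_path_aux:
  assumes ab: "adj a b"
  shows "\<forall>p u v. gp p n u v \<longrightarrow> u \<in> Wv a b \<longrightarrow> v \<in> Wv a b \<longrightarrow> (\<forall>i\<le>n. p i \<in> Wv a b)"
proof (induction n rule: less_induct)
  case (less n)
  let ?W = "Wv a b"
  have sub: "\<forall>j. j0 \<le> j \<and> j \<le> j1 \<longrightarrow> p j \<in> ?W"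
    if "gp p n u v" "j0 \<le> j1" "j1 \<le> n" "j1 - j0 < n" "p j0 \<in> ?W" "p j1 \<in> ?W" for p u v j0 j1
  proof (intro allI impI)
    fix j assume j: "j0 \<le> j \<and> j \<le> j1"
    have g: "gp (\<lambda>k. p (j0 + k)) (j1 - j0) (p j0) (p j1)" using gp_sub that by blast
    have "\<forall>i\<le>j1 - j0. p (j0 + i) \<in> ?W" using less.IH[OF that(4)] g that(5,6) by blast
    moreover have "j - j0 \<le> j1 - j0" using j by arith
    ultimately have "p (j0 + (j - j0)) \<in> ?W" by blast
    then show "p j \<in> ?W" using j by simp
  qed
  have main: "\<forall>p u v. gp p n u v \<longrightarrow> u \<in> ?W \<longrightarrow> v \<in> ?W \<longrightarrow> (\<Sum>j\<le>n. d (p j) a) = s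
               \<longrightarrow> (\<forall>i\<le>n. p i \<in> ?W)" for s
  proof (induction s rule: less_induct)
    case (less s)
    show ?case
    proof (rule allI, rule allI, rule allI, rule impI, rule impI, rule impI, rule impI)
      fix p u v assume gpp: "gp p n u v" and u: "u \<in> ?W" and v: "v \<in> ?W"
        and pot: "(\<Sum>j\<le>n. d (p j) a) = s"
      have p: "p 0 = u" "p n = v" "\<forall>i<n. adj (p i) (p (Suc i))" "d u v = n"
        using gpp unfolding gp_def by auto
      show "\<forall>i\<le>n. p i \<in> ?W"
      proof (rule ccontr)
        assume "\<not> (\<forall>i\<le>n. p i \<in> ?W)"
        then obtain i0 where i0: "i0 \<le> n" "p i0 \<notin> ?W" by blast
        have i0pos: "0 < i0" using i0 p u by (cases "i0 = 0") auto
        have i0n: "i0 < n" using i0 p v by (cases "i0 = n") auto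
        have interior: "p j \<notin> ?W" if "0 < j" "j < n" for j
        proof
          assume pj: "p j \<in> ?W"
          show False
          proof (cases "j < i0")
            case True
            have "\<forall>k. j \<le> k \<and> k \<le> n \<longrightarrow> p k \<in> ?W"
              using sub[OF gpp, of j n] that pj p v True by auto
            then show False using i0 True by auto
          next
            case False
            have "\<forall>k. 0 \<le> k \<and> k \<le> j \<longrightarrow> p k \<in> ?W"
              using sub[OF gpp, of 0 j] that pj p u by auto
            then show False using i0 False by auto
          qed
        qed
        have n2: "2 \<le> n" using i0pos i0n by arith
        define g where "g j = d (p j) a" for j
        have step: "g (Suc j) = g j + 1 \<or> g j = g (Suc j) + 1" if "j < n" for j
          using bip[OF p(3)[rule_format, OF that], of a] unfolding g_def by (simp add: d_sym)
        have notW: "d (p j) b < d (p j) a" if "0 < j" "j < n" for j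
          using interior[OF that] W_compl[OF ab] unfolding Wv_def by auto
        have first: "g 1 = g 0 + 1"
          using side_step[OF ab p(3)[rule_format, of 0]] u notW[of 1] n2 p(1)
          unfolding g_def Wv_def by auto
        have nn: "n - 1 < n" "Suc (n - 1) = n" using n2 by arith+
        have "adj (p (n - 1)) (p (Suc (n - 1)))" using p(3) nn(1) by blast
        then have "adj (p n) (p (n - 1))" using nn(2) symadj by simp
        then have last: "g (n - 1) = g n + 1"
          using side_step[OF ab, of "p n" "p (n - 1)"] v notW[of "n - 1"] n2 p(2)
          unfolding g_def Wv_def by auto
        define P where "P i = (1 \<le> i \<and> i < n \<and> g (Suc i) < g i)" for i
        have Pn: "P (n - 1)" unfolding P_def using last n2 by (simp add: Suc_diff_Suc numeral_2_eq_2)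
        define i where "i = (LEAST i. P i)"
        have Pi: "P i" unfolding i_def using Pn by (rule LeastI)
        have i1: "1 \<le> i" "i < n" "g (Suc i) < g i" using Pi unfolding P_def by auto
        have gi1: "g (Suc i) + 1 = g i" using step[OF i1(2)] i1(3) by auto
        have gi0: "g (i - 1) + 1 = g i"
        proof (cases "i = 1")
          case True then show ?thesis using first by simp
        next
          case False
          then have "\<not> P (i - 1)" using not_less_Least[of "i - 1" P] i1 unfolding i_def by auto
          then have "\<not> g i < g (i - 1)" using i1 False unfolding P_def by auto
          moreover have "g (Suc (i - 1)) = g (i - 1) + 1 \<or> g (i - 1) = g (Suc (i - 1)) + 1"
            using step[of "i - 1"] i1 by auto
          ultimately show ?thesis using i1 by auto
        qed
        let ?x = "p (i - 1)" and ?y = "p (Suc i)" and ?w = "p i"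
        have ii: "i - 1 < n" "Suc (i - 1) = i" using i1 by arith+
        have "adj (p (i - 1)) (p (Suc (i - 1)))" using p(3) ii(1) by blast
        then have awx: "adj ?w ?x" using ii(2) symadj by simp
        have awy: "adj ?w ?y" using p(3) i1 by auto
        have "d u ?x = i - 1" "d u ?y = Suc i" using gp_dist[OF gpp] i1 by auto
        then have xy: "?x \<noteq> ?y" by auto
        obtain k where k: "g i = Suc k" using gi1 by (cases "g i") auto
        have "d a ?x = k" "d a ?y = k" "d a ?w = Suc k" using gi0 gi1 k unfolding g_def
          by (auto simp: d_sym)
        then obtain t where t: "adj ?x t" "adj ?y t" "d a t + 1 = k"
          using QC[OF awx awy xy] by blast
        define q where "q = p(i := t)"
        have q0: "q 0 = u" "q n = v" using p i1 unfolding q_def by auto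
        have qadj: "\<forall>j<n. adj (q j) (q (Suc j))"
        proof (intro allI impI)
          fix j assume j: "j < n"
          show "adj (q j) (q (Suc j))"
          proof (cases "j = i")
            case True then show ?thesis using t(2) symadj unfolding q_def by auto
          next
            case False
            show ?thesis
            proof (cases "Suc j = i")
              case True
              then have "j = i - 1" by auto
              then show ?thesis using t(1) True unfolding q_def by auto
            next
              case False2: False
              then show ?thesis using p(3) j False unfolding q_def by auto
            qed
          qed
        qed
        have gpq: "gp q n u v" unfolding gp_def using q0 qadj p(4) by auto
        have fin: "finite {..n}" by simp
        have imem: "i \<in> {..n}" using i1 by auto
        have s1: "(\<Sum>j\<le>n. d (p j) a) = d (p i) a + (\<Sum>j\<in>{..n} - {i}. d (p j) a)"
          using sum.remove[OF fin imem] by blast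
        have s2: "(\<Sum>j\<le>n. d (q j) a) = d (q i) a + (\<Sum>j\<in>{..n} - {i}. d (q j) a)"
          using sum.remove[OF fin imem] by blast
        have s3: "(\<Sum>j\<in>{..n} - {i}. d (q j) a) = (\<Sum>j\<in>{..n} - {i}. d (p j) a)"
          by (rule sum.cong) (auto simp: q_def)
        have "d (q i) a < d (p i) a" using t(3) k unfolding q_def g_def by (simp add: d_sym)
        then have "(\<Sum>j\<le>n. d (q j) a) < s" using s1 s2 s3 pot by linarith
        then have allq: "\<forall>j\<le>n. q j \<in> ?W" using less.IH gpq u v by blast
        show False
        proof (cases "n = 2")
          case False
          then have n3: "3 \<le> n" using n2 by arith
          define j where "j = (if i = 1 then 2 else (1::nat))"
          have "0 < j" "j < n" "j \<noteq> i" unfolding j_def using n3 by auto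
          then have "q j = p j" unfolding q_def by auto
          moreover have "q j \<in> ?W" using allq \<open>j < n\<close> by simp
          ultimately show False using interior[OF \<open>0 < j\<close> \<open>j < n\<close>] by simp
        next
          case True
          then have ii: "i = 1" using i1 by auto
          have "q 1 \<in> ?W" using allq True by simp
          then have tW: "t \<in> ?W" using ii unfolding q_def by simp
          have p1: "p 1 \<notin> ?W" using interior True by auto
          have x0: "?x = u" "?y = v" using ii p True by (auto simp: numeral_2_eq_2)
          have duv: "d u v = 2" using p True by simp
          have dub: "d u b = d u a + 1" using bip[OF ab, of u] u unfolding Wv_def by auto
          have dvb: "d v b = d v a + 1" using bip[OF ab, of v] v unfolding Wv_def by auto
          have dp1b: "d (p 1) a = d (p 1) b + 1" using bip[OF ab, of "p 1"] p1 unfolding Wv_def by auto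
          have dtb: "d t b = d t a + 1" using bip[OF ab, of t] tW unfolding Wv_def by auto
          have ua: "d u a = k" "d v a = k" "d (p 1) a = Suc k"
            using \<open>d a ?x = k\<close> \<open>d a ?y = k\<close> \<open>d a ?w = Suc k\<close> x0 ii by (auto simp: d_sym)
          have ta: "d t a + 1 = k" using t(3) by (simp add: d_sym)
          have a1: "d u (p 1) = 1" "d (p 1) v = 1" using awx awy x0 ii d_adj symadj by auto
          have a2: "d u t = 1" "d t v = 1" using t x0 d_adj symadj by auto
          have "p 1 = t"
            apply (rule median_uniq[of u _ v b])
            using a1 a2 duv dub dvb dp1b dtb ua ta by (auto simp: d_sym)
          then show False using tW p1 by simp
        qed
      qed
    qed
  qed
  show ?case using main by blast
qed

lemma W_convex:
  assumes ab: "adj a b" and u: "u \<in> Wv a b" and v: "v \<in> Wv a b" and z: "z \<in> interval adj u v"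
  shows "z \<in> Wv a b"
proof -
  obtain p where p: "gp p (d u v) u v" "p (d u z) = z"
    using path_through z unfolding interval_def by blast
  have "d u z \<le> d u v" using z unfolding interval_def by auto
  moreover have "\<forall>i\<le>d u v. p i \<in> Wv a b" using conv_path_aux[OF ab] p(1) u v by blast
  ultimately have "p (d u z) \<in> Wv a b" by blast
  then show ?thesis using p(2) by simp
qed

end

context mg
begin

lemma W_edge_sub:
  assumes ab: "adj a b" and xy: "adj x y" and x: "x \<in> Wv a b" and y: "y \<in> Wv b a"
  shows "Wv a b \<subseteq> Wv x y"
proof
  fix z assume z: "z \<in> Wv a b"
  show "z \<in> Wv x y"
  proof (rule ccontr)
    assume "z \<notin> Wv x y"
    then have "z \<in> Wv y x" using W_compl[OF xy] by blast
    then have "d z y < d z x" unfolding Wv_def by simp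
    then have "d z x = d z y + 1" using bip[OF xy, of z] by auto
    moreover have "d y x = 1" using d_adj symadj xy by blast
    ultimately have "y \<in> interval adj z x" unfolding interval_def by simp
    then have "y \<in> Wv a b" using W_convex[OF ab z x] by blast
    then show False using y W_disj by blast
  qed
qed

lemma W_edge_eq:
  assumes ab: "adj a b" and xy: "adj x y" and x: "x \<in> Wv a b" and y: "y \<in> Wv b a"
  shows "Wv x y = Wv a b"
proof
  show "Wv a b \<subseteq> Wv x y" by (rule W_edge_sub[OF assms])
  have "Wv b a \<subseteq> Wv y x" by (rule W_edge_sub[OF symadj[OF ab] symadj[OF xy] y x])
  then show "Wv x y \<subseteq> Wv a b" using W_compl[OF ab] W_disj by blast
qed

lemma Wv_self: "adj x y \<Longrightarrow> x \<in> Wv x y"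
  unfolding Wv_def using d_adj by simp

lemma theta_iff:
  assumes ab: "adj a b" and xy: "adj x y"
  shows "theta adj (a, b) (x, y) \<longleftrightarrow> (Wv x y = Wv a b \<or> Wv x y = Wv b a)"
proof
  assume th: "theta adj (a, b) (x, y)"
  have th': "d a x + d b y \<noteq> d a y + d b x" using th unfolding theta_def by simp
  show "Wv x y = Wv a b \<or> Wv x y = Wv b a"
  proof (cases "x \<in> Wv a b")
    case xa: True
    show ?thesis
    proof (cases "y \<in> Wv a b")
      case True
      have "d x b = d x a + 1" "d y b = d y a + 1"
        using bip[OF ab, of x] bip[OF ab, of y] xa True unfolding Wv_def by auto
      then show ?thesis using th' by (simp add: d_sym)
    next
      case False
      then have "y \<in> Wv b a" using W_compl[OF ab] by blast
      then show ?thesis using W_edge_eq[OF ab xy xa] by blast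
    qed
  next
    case xb: False
    then have xb': "x \<in> Wv b a" using W_compl[OF ab] by blast
    show ?thesis
    proof (cases "y \<in> Wv a b")
      case True
      then show ?thesis using W_edge_eq[OF symadj[OF ab] xy xb'] by blast
    next
      case False
      then have "y \<in> Wv b a" using W_compl[OF ab] by blast
      then have "d x a = d x b + 1" "d y a = d y b + 1"
        using bip[OF ab, of x] bip[OF ab, of y] xb' unfolding Wv_def by auto
      then show ?thesis using th' by (simp add: d_sym)
    qed
  qed
next
  assume h: "Wv x y = Wv a b \<or> Wv x y = Wv b a"
  have xin: "x \<in> Wv x y" using Wv_self xy by blast
  have yin: "y \<in> Wv y x" using Wv_self symadj xy by blast
  then have ynot: "y \<notin> Wv x y" using W_disj by blast
  show "theta adj (a, b) (x, y)"
  proof (cases "Wv x y = Wv a b")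
    case True
    then have "x \<in> Wv a b" "y \<in> Wv b a" using xin ynot W_compl[OF ab] by auto
    then have "d x b = d x a + 1" "d y a = d y b + 1"
      using bip[OF ab, of x] bip[OF ab, of y] unfolding Wv_def by auto
    then show ?thesis unfolding theta_def by (simp add: d_sym)
  next
    case False
    then have E: "Wv x y = Wv b a" using h by blast
    then have "x \<in> Wv b a" "y \<in> Wv a b" using xin ynot W_compl[OF symadj[OF ab]] by auto
    then have "d x a = d x b + 1" "d y b = d y a + 1"
      using bip[OF ab, of x] bip[OF ab, of y] unfolding Wv_def by auto
    then show ?thesis unfolding theta_def by (simp add: d_sym)
  qed
qed

lemma cross_gen:
  assumes ab: "adj a b"
  shows "\<forall>z z'. d z z' = n \<longrightarrow> z \<in> Wv a b \<longrightarrow> z' \<in> Wv b a \<longrightarrow>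
    (\<exists>x y. adj x y \<and> x \<in> Wv a b \<and> y \<in> Wv b a \<and> x \<in> interval adj z z' \<and> y \<in> interval adj z z')"
proof (induction n)
  case 0
  show ?case
  proof (intro allI impI)
    fix z z' assume h: "d z z' = 0" "z \<in> Wv a b" "z' \<in> Wv b a"
    then have "z = z'" using d_eq0 by blast
    then show "\<exists>x y. adj x y \<and> x \<in> Wv a b \<and> y \<in> Wv b a \<and> x \<in> interval adj z z' \<and> y \<in> interval adj z z'"
      using h W_disj by blast
  qed
next
  case (Suc n)
  show ?case
  proof (intro allI impI)
    fix z z' assume dz: "d z z' = Suc n" and z: "z \<in> Wv a b" and z': "z' \<in> Wv b a"
    obtain z1 where z1: "adj z z1" "d z1 z' = n" using d_step[OF dz] by blast
    have dzz1: "d z z1 = 1" using d_adj z1(1) by blast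
    have z1i: "z1 \<in> interval adj z z'" unfolding interval_def using dz z1 dzz1 by simp
    have zi: "z \<in> interval adj z z'" unfolding interval_def by simp
    show "\<exists>x y. adj x y \<and> x \<in> Wv a b \<and> y \<in> Wv b a \<and> x \<in> interval adj z z' \<and> y \<in> interval adj z z'"
    proof (cases "z1 \<in> Wv b a")
      case True
      then show ?thesis using z1(1) z zi z1i by blast
    next
      case False
      then have "z1 \<in> Wv a b" using W_compl[OF ab] by blast
      then obtain x y where xy: "adj x y" "x \<in> Wv a b" "y \<in> Wv b a"
        "x \<in> interval adj z1 z'" "y \<in> interval adj z1 z'"
        using Suc.IH z1(2) z' by blast
      have sub: "w \<in> interval adj z z'" if "w \<in> interval adj z1 z'" for w
      proof -
        have "d z1 w + d w z' = n" using that z1(2) unfolding interval_def by simp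
        moreover have "d z w \<le> d z z1 + d z1 w" by (rule d_tri)
        moreover have "d z z' \<le> d z w + d w z'" by (rule d_tri)
        ultimately show ?thesis unfolding interval_def using dz dzz1 by simp
      qed
      show ?thesis using xy sub by blast
    qed
  qed
qed

lemma cross_gen':
  assumes "adj a b" "z \<in> Wv a b" "z' \<in> Wv b a"
  shows "\<exists>x y. adj x y \<and> x \<in> Wv a b \<and> y \<in> Wv b a \<and> x \<in> interval adj z z' \<and> y \<in> interval adj z z'"
  using cross_gen[OF assms(1)] assms(2,3) by blast

end

lemma fpow_0[simp]: "fpow g 0 = id"
  unfolding fpow_def by simp

lemma fpow_succ:
  assumes "bij g" shows "fpow g (k + 1) = g \<circ> fpow g k"
proof -
  have gi: "g \<circ> inv g = id" using assms bij_is_surj surj_iff by blast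
  show ?thesis
  proof (cases "0 \<le> k")
    case True
    then have "nat (k + 1) = Suc (nat k)" by simp
    then show ?thesis using True unfolding fpow_def by simp
  next
    case False
    show ?thesis
    proof (cases "k = -1")
      case True
      then show ?thesis unfolding fpow_def using gi by simp
    next
      case False2: False
      then have "nat (- k) = Suc (nat (- (k + 1)))" using False by simp
      then have "fpow g k = inv g \<circ> fpow g (k + 1)"
        unfolding fpow_def using False False2 by simp
      then show ?thesis using gi by (simp add: comp_assoc[symmetric])
    qed
  qed
qed

lemma fpow_pred:
  assumes "bij g" shows "fpow g (k - 1) = inv g \<circ> fpow g k"
proof -
  have ig: "inv g \<circ> g = id" using assms bij_is_inj inj_iff by blast
  have "fpow g k = g \<circ> fpow g (k - 1)" using fpow_succ[OF assms, of "k - 1"] by simp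
  then have "inv g \<circ> fpow g k = fpow g (k - 1)" using ig by (simp add: comp_assoc[symmetric])
  then show ?thesis by simp
qed

lemma fpow_add:
  assumes "bij g" shows "fpow g (a + b) = fpow g a \<circ> fpow g b"
proof (induction a rule: int_induct[where k = 0])
  case base then show ?case by simp
next
  case (step1 i)
  have "fpow g (i + 1 + b) = fpow g ((i + b) + 1)" by (simp add: algebra_simps)
  also have "\<dots> = g \<circ> fpow g (i + b)" by (rule fpow_succ[OF assms])
  also have "\<dots> = g \<circ> fpow g i \<circ> fpow g b" by (simp only: step1(2) comp_assoc)
  also have "\<dots> = fpow g (i + 1) \<circ> fpow g b" using fpow_succ[OF assms, of i] by simp
  finally show ?case .
next
  case (step2 i)
  have "fpow g (i - 1 + b) = fpow g ((i + b) - 1)" by (simp add: algebra_simps)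
  also have "\<dots> = inv g \<circ> fpow g (i + b)" by (rule fpow_pred[OF assms])
  also have "\<dots> = inv g \<circ> fpow g i \<circ> fpow g b" by (simp only: step2(2) comp_assoc)
  also have "\<dots> = fpow g (i - 1) \<circ> fpow g b" using fpow_pred[OF assms, of i] by simp
  finally show ?case .
qed

lemma fpow_1: "fpow g 1 = g"
  unfolding fpow_def by simp

lemma fpow_neg_comp: "bij g \<Longrightarrow> fpow g (- a) \<circ> fpow g a = id"
  using fpow_add[of g "-a" a] by simp

lemma fpow_comp_neg: "bij g \<Longrightarrow> fpow g a \<circ> fpow g (- a) = id"
  using fpow_add[of g a "-a"] by simp

lemma fpow_neg_app: "bij g \<Longrightarrow> fpow g (- a) (fpow g a x) = x"
proof -
  assume "bij g"
  then have "(fpow g (- a) \<circ> fpow g a) x = id x" using fpow_neg_comp[of g a] by simp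
  then show ?thesis by simp
qed

lemma fpow_app_neg: "bij g \<Longrightarrow> fpow g a (fpow g (- a) x) = x"
proof -
  assume "bij g"
  then have "(fpow g a \<circ> fpow g (- a)) x = id x" using fpow_comp_neg[of g a] by simp
  then show ?thesis by simp
qed

lemma fpow_add_app: "bij g \<Longrightarrow> fpow g (a + b) x = fpow g a (fpow g b x)"
  using fpow_add[of g a b] by simp

lemma fpow_bij: assumes b: "bij g" shows "bij (fpow g a)"
  by (rule o_bij[OF fpow_neg_comp[OF b] fpow_comp_neg[OF b]])

lemma aut_group_fpow:
  assumes "aut_group adj G" "g \<in> G" shows "fpow g k \<in> G"
proof -
  have comp: "\<And>f h. f \<in> G \<Longrightarrow> h \<in> G \<Longrightarrow> f \<circ> h \<in> G" and idG: "id \<in> G"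
    and invG: "\<And>f. f \<in> G \<Longrightarrow> inv f \<in> G"
    using assms(1) unfolding aut_group_def by auto
  have pw: "f ^^ n \<in> G" if "f \<in> G" for f n
  proof (induction n)
    case 0 show ?case by (simp only: funpow.simps(1) idG)
  next
    case (Suc n) show ?case by (simp only: funpow.simps(2)) (rule comp[OF that Suc])
  qed
  show ?thesis unfolding fpow_def using pw assms(2) invG by auto
qed

lemma aut_group_aut: "aut_group adj G \<Longrightarrow> g \<in> G \<Longrightarrow> graph_aut adj g"
  unfolding aut_group_def by auto

lemma fpow_image:
  assumes "bij g" "g ` Y = Y" shows "fpow g k ` Y = Y"
proof -
  have "inv g ` (g ` Y) = Y" using assms(1) by (simp add: bij_is_inj image_inv_f_f)
  then have ig: "inv g ` Y = Y" using assms(2) by simp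
  have pw: "(f ^^ n) ` Y = Y" if "f ` Y = Y" for f n
  proof (induction n)
    case 0 show ?case by simp
  next
    case (Suc n) show ?case by (simp only: funpow.simps(2) image_comp[symmetric] Suc that)
  qed
  show ?thesis unfolding fpow_def using pw assms(2) ig by auto
qed

lemma graph_aut_inv:
  assumes "graph_aut adj g" shows "graph_aut adj (inv g)"
proof -
  have b: "bij g" using assms unfolding graph_aut_def by auto
  have s: "g (inv g x) = x" for x using b by (simp add: bij_is_surj surj_f_inv_f)
  have "adj (inv g x) (inv g y) \<longleftrightarrow> adj x y" for x y
  proof -
    have "adj (g (inv g x)) (g (inv g y)) \<longleftrightarrow> adj (inv g x) (inv g y)"
      using assms unfolding graph_aut_def by blast
    then show ?thesis using s by simp
  qed
  then show ?thesis unfolding graph_aut_def using bij_imp_bij_inv[OF b] by auto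
qed

lemma walk_aut_fw:
  assumes "graph_aut adj g" "walk adj x y n" shows "walk adj (g x) (g y) n"
proof -
  obtain p where p: "p 0 = x" "p n = y" "\<forall>i<n. adj (p i) (p (Suc i))"
    using assms(2) unfolding walk_def by blast
  have "\<forall>i<n. adj (g (p i)) (g (p (Suc i)))" using p(3) assms(1) unfolding graph_aut_def by blast
  then show ?thesis unfolding walk_def using p by (intro exI[of _ "g \<circ> p"]) simp
qed

lemma walk_aut:
  assumes "graph_aut adj g" shows "walk adj (g x) (g y) n \<longleftrightarrow> walk adj x y n"
proof
  assume "walk adj (g x) (g y) n"
  then have "walk adj (inv g (g x)) (inv g (g y)) n" by (rule walk_aut_fw[OF graph_aut_inv[OF assms]])
  moreover have "inv g (g z) = z" for z using assms unfolding graph_aut_def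
    by (simp add: bij_is_inj)
  ultimately show "walk adj x y n" by simp
qed (rule walk_aut_fw[OF assms])

lemma gdist_aut: assumes "graph_aut adj g" shows "gdist adj (g x) (g y) = gdist adj x y"
proof -
  have "walk adj (g x) (g y) = walk adj x y" by (rule ext) (rule walk_aut[OF assms])
  then show ?thesis unfolding gdist_def by simp
qed

lemma theta_aut: assumes "graph_aut adj g" shows "theta adj (map_prod g g e) (map_prod g g f) = theta adj e f"
  unfolding theta_def by (cases e; cases f) (simp add: gdist_aut[OF assms])

lemma hyp_image_comp: "hyp_image (f \<circ> g) H = hyp_image f (hyp_image g H)"
  unfolding hyp_image_def by (simp add: image_comp map_prod.comp)

lemma hyp_image_id[simp]: "hyp_image id H = H"
  unfolding hyp_image_def by (simp add: map_prod.id)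

lemma carrier_image: "carrier (hyp_image g H) = g ` carrier H"
  unfolding carrier_def hyp_image_def by (simp add: image_image)

lemma diam_le_image:
  assumes "graph_aut adj g" shows "diam_le adj (g ` S) K \<longleftrightarrow> diam_le adj S K"
  unfolding diam_le_def by (simp add: gdist_aut[OF assms])


definition rv :: "'a \<times> 'a \<Rightarrow> 'a \<times> 'a" where "rv e = (snd e, fst e)"

lemma rv_simps[simp]: "fst (rv e) = snd e" "snd (rv e) = fst e" "rv (rv e) = e"
  unfolding rv_def by auto

lemma edges_inD: "e \<in> edges_in adj Y \<Longrightarrow> adj (fst e) (snd e) \<and> fst e \<in> Y \<and> snd e \<in> Y"
  unfolding edges_in_def by auto

lemma edges_inI: "adj a b \<Longrightarrow> a \<in> Y \<Longrightarrow> b \<in> Y \<Longrightarrow> (a, b) \<in> edges_in adj Y"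
  unfolding edges_in_def by auto

context mg
begin

definition cls :: "'v set \<Rightarrow> 'v \<times> 'v \<Rightarrow> ('v \<times> 'v) set" where
  "cls Y e = {f \<in> edges_in adj Y. theta adj e f}"

definition Wf :: "'v \<times> 'v \<Rightarrow> 'v set" where "Wf e = Wv (fst e) (snd e)"

lemma rv_edges: "e \<in> edges_in adj Y \<Longrightarrow> rv e \<in> edges_in adj Y"
  unfolding edges_in_def rv_def using symadj by auto

lemma Wf_rv: assumes "e \<in> edges_in adj Y" shows "Wf (rv e) = - Wf e"
  using W_compl[of "fst e" "snd e"] edges_inD[OF assms] unfolding Wf_def by auto

lemma theta_W:
  assumes e: "e \<in> edges_in adj Y" and f: "f \<in> edges_in adj Y"
  shows "theta adj e f \<longleftrightarrow> (Wf f = Wf e \<or> Wf f = - Wf e)"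
proof -
  obtain a b where ab: "e = (a, b)" by (cases e)
  obtain x y where xy: "f = (x, y)" by (cases f)
  have "adj a b" "adj x y" using edges_inD[OF e] edges_inD[OF f] ab xy by auto
  then show ?thesis using theta_iff[of a b x y] Wf_rv[OF e] ab xy unfolding Wf_def rv_def by auto
qed

lemma cls_eq:
  assumes e: "e \<in> edges_in adj Y" and f: "f \<in> cls Y e"
  shows "cls Y f = cls Y e"
proof -
  have fe: "f \<in> edges_in adj Y" and th: "theta adj e f" using f unfolding cls_def by auto
  have "Wf f = Wf e \<or> Wf f = - Wf e" using theta_W[OF e fe] th by blast
  then have "(Wf g = Wf f \<or> Wf g = - Wf f) \<longleftrightarrow> (Wf g = Wf e \<or> Wf g = - Wf e)" for g
    by auto
  then show ?thesis unfolding cls_def using theta_W[OF e] theta_W[OF fe] by auto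
qed

lemma self_cls: "e \<in> edges_in adj Y \<Longrightarrow> e \<in> cls Y e"
  unfolding cls_def using theta_W by blast

lemma rv_cls: "e \<in> edges_in adj Y \<Longrightarrow> rv e \<in> cls Y e"
  unfolding cls_def using theta_W[of e Y "rv e"] rv_edges Wf_rv by auto

lemma halfspace_eq: "halfspace adj Y e = Wf e \<inter> Y"
  unfolding halfspace_def Wf_def Wv_def by auto

lemma halfspaces_cls:
  assumes e: "e \<in> edges_in adj Y"
  shows "halfspaces adj Y (cls Y e) = {halfspace adj Y e, halfspace adj Y (rv e)}"
proof
  show "halfspaces adj Y (cls Y e) \<subseteq> {halfspace adj Y e, halfspace adj Y (rv e)}"
  proof
    fix W assume "W \<in> halfspaces adj Y (cls Y e)"
    then obtain f where f: "f \<in> cls Y e" "W = halfspace adj Y f" unfolding halfspaces_def by auto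
    have "Wf f = Wf e \<or> Wf f = - Wf e" using theta_W[OF e] f(1) unfolding cls_def by blast
    then have "Wf f = Wf e \<or> Wf f = Wf (rv e)" using Wf_rv[OF e] by simp
    then show "W \<in> {halfspace adj Y e, halfspace adj Y (rv e)}" using f(2) halfspace_eq by auto
  qed
  show "{halfspace adj Y e, halfspace adj Y (rv e)} \<subseteq> halfspaces adj Y (cls Y e)"
    unfolding halfspaces_def using self_cls[OF e] rv_cls[OF e] by auto
qed

lemma carrier_cls_sub: "carrier (cls Y e) \<subseteq> Y"
  unfolding carrier_def cls_def edges_in_def by auto

lemma carrier_cls_mem: "e \<in> edges_in adj Y \<Longrightarrow> fst e \<in> carrier (cls Y e)"
  unfolding carrier_def using self_cls by auto

lemma half_sub: "halfspace adj Y e \<subseteq> Y"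
  unfolding halfspace_def by auto

lemma half_cover:
  assumes "e \<in> edges_in adj Y" "z \<in> Y"
  shows "z \<in> halfspace adj Y e \<or> z \<in> halfspace adj Y (rv e)"
  using assms Wf_rv[OF assms(1)] unfolding halfspace_eq by auto

lemma half_disj:
  assumes "e \<in> edges_in adj Y"
  shows "halfspace adj Y e \<inter> halfspace adj Y (rv e) = {}"
  using Wf_rv[OF assms(1)] unfolding halfspace_eq by auto

lemma half_convex:
  assumes Y: "convex_set adj Y" and e: "e \<in> edges_in adj Y"
    and u: "u \<in> halfspace adj Y e" and v: "v \<in> halfspace adj Y e" and z: "z \<in> interval adj u v"
  shows "z \<in> halfspace adj Y e"
proof -
  have "z \<in> Y" using Y u v z unfolding convex_set_def halfspace_def by auto
  moreover have "z \<in> Wf e" using W_convex[of "fst e" "snd e" u v z] edges_inD[OF e] u v z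
    unfolding halfspace_eq Wf_def by auto
  ultimately show ?thesis unfolding halfspace_eq by auto
qed

lemma cross_Y:
  assumes Y: "convex_set adj Y" and e: "e \<in> edges_in adj Y"
    and z: "z \<in> halfspace adj Y e" and z': "z' \<in> halfspace adj Y (rv e)"
  shows "\<exists>c\<in>carrier (cls Y e). c \<in> interval adj z z'"
proof -
  have ab: "adj (fst e) (snd e)" using edges_inD[OF e] by blast
  have zY: "z \<in> Y" "z' \<in> Y" using z z' half_sub[of Y e] half_sub[of Y "rv e"] by blast+
  have "z \<in> Wv (fst e) (snd e)" "z' \<in> Wv (snd e) (fst e)" using z z'
    unfolding halfspace_eq Wf_def by auto
  then obtain x y where xy: "adj x y" "x \<in> Wv (fst e) (snd e)" "y \<in> Wv (snd e) (fst e)"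
    "x \<in> interval adj z z'" "y \<in> interval adj z z'"
    using cross_gen'[OF ab] by blast
  have "x \<in> Y" "y \<in> Y" using Y zY xy unfolding convex_set_def by auto
  then have xyE: "(x, y) \<in> edges_in adj Y" using xy(1) edges_inI by metis
  have "Wf (x, y) = Wf e" using W_edge_eq[OF ab xy(1-3)] unfolding Wf_def by simp
  then have "(x, y) \<in> cls Y e" unfolding cls_def using theta_W[OF e xyE] xyE by auto
  then have "x \<in> carrier (cls Y e)" unfolding carrier_def by force
  then show ?thesis using xy by blast
qed

lemma hyperplanes_iff: "H \<in> hyperplanes adj Y \<longleftrightarrow> (\<exists>e\<in>edges_in adj Y. H = cls Y e)"
  unfolding hyperplanes_def cls_def by auto

lemma edges_image:
  assumes g: "graph_aut adj g" and gY: "g ` Y = Y" and e: "e \<in> edges_in adj Y"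
  shows "map_prod g g e \<in> edges_in adj Y"
proof -
  obtain a b where ab: "e = (a, b)" by (cases e)
  have h: "adj a b" "a \<in> Y" "b \<in> Y" using edges_inD[OF e] ab by auto
  have "g a \<in> g ` Y" "g b \<in> g ` Y" using h(2,3) by auto
  then have "g a \<in> Y" "g b \<in> Y" using gY by simp_all
  moreover have "adj (g a) (g b)" using h(1) g unfolding graph_aut_def by blast
  ultimately show ?thesis using ab edges_inI[of adj "g a" "g b" Y] by simp
qed

lemma edges_image_eq:
  assumes g: "graph_aut adj g" and gY: "g ` Y = Y"
  shows "map_prod g g ` edges_in adj Y = edges_in adj Y"
proof
  show "map_prod g g ` edges_in adj Y \<subseteq> edges_in adj Y"
  proof
    fix x assume "x \<in> map_prod g g ` edges_in adj Y"
    then obtain e where e: "e \<in> edges_in adj Y" "x = map_prod g g e" by (rule imageE)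
    then show "x \<in> edges_in adj Y" using edges_image[OF g gY e(1)] by simp
  qed
  show "edges_in adj Y \<subseteq> map_prod g g ` edges_in adj Y"
  proof
    fix f assume f: "f \<in> edges_in adj Y"
    have gi: "graph_aut adj (inv g)" using graph_aut_inv[OF g] .
    have b: "bij g" using g unfolding graph_aut_def by auto
    have "inv g ` (g ` Y) = Y" using b by (simp add: bij_is_inj image_inv_f_f)
    then have igY: "inv g ` Y = Y" using gY by simp
    have mem: "map_prod (inv g) (inv g) f \<in> edges_in adj Y" using edges_image[OF gi igY f] .
    have eq: "f = map_prod g g (map_prod (inv g) (inv g) f)"
      using b by (cases f) (simp add: bij_is_surj surj_f_inv_f)
    show "f \<in> map_prod g g ` edges_in adj Y"
      using image_eqI[of f "map_prod g g" "map_prod (inv g) (inv g) f" "edges_in adj Y"] eq mem by blast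
  qed
qed

lemma cls_image:
  assumes g: "graph_aut adj g" and gY: "g ` Y = Y"
  shows "hyp_image g (cls Y e) = cls Y (map_prod g g e)"
proof -
  have "hyp_image g (cls Y e) = map_prod g g ` {f \<in> edges_in adj Y. theta adj e f}"
    unfolding hyp_image_def cls_def by simp
  also have "\<dots> = {f' \<in> map_prod g g ` edges_in adj Y. theta adj (map_prod g g e) f'}"
  proof (intro equalityI subsetI)
    fix f' assume "f' \<in> map_prod g g ` {f \<in> edges_in adj Y. theta adj e f}"
    then obtain f where f0: "f' = map_prod g g f" "f \<in> {f \<in> edges_in adj Y. theta adj e f}"
      by (rule imageE)
    then have f: "f \<in> edges_in adj Y" "theta adj e f" by auto
    then have "theta adj (map_prod g g e) (map_prod g g f)" using theta_aut[OF g, of e f] by simp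
    moreover have "map_prod g g f \<in> map_prod g g ` edges_in adj Y" using f(1) by (rule imageI)
    ultimately show "f' \<in> {f' \<in> map_prod g g ` edges_in adj Y. theta adj (map_prod g g e) f'}"
      using f0(1) by simp
  next
    fix f' assume "f' \<in> {f' \<in> map_prod g g ` edges_in adj Y. theta adj (map_prod g g e) f'}"
    then have h: "f' \<in> map_prod g g ` edges_in adj Y" "theta adj (map_prod g g e) f'" by simp_all
    from h(1) obtain f where f: "f' = map_prod g g f" "f \<in> edges_in adj Y" by (rule imageE)
    have "theta adj e f" using theta_aut[OF g, of e f] h(2) f(1) by simp
    then have "f \<in> {f \<in> edges_in adj Y. theta adj e f}" using f(2) by simp
    then have "map_prod g g f \<in> map_prod g g ` {f \<in> edges_in adj Y. theta adj e f}" by (rule imageI)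
    then show "f' \<in> map_prod g g ` {f \<in> edges_in adj Y. theta adj e f}" using f(1) by simp
  qed
  also have "\<dots> = cls Y (map_prod g g e)" unfolding cls_def edges_image_eq[OF g gY] by simp
  finally show ?thesis .
qed

lemma halfspace_image:
  assumes g: "graph_aut adj g" and gY: "g ` Y = Y"
  shows "halfspace adj Y (map_prod g g e) = g ` halfspace adj Y e"
proof -
  have b: "bij g" using g unfolding graph_aut_def by auto
  have "halfspace adj Y (map_prod g g e) = {z \<in> g ` Y. d z (g (fst e)) < d z (g (snd e))}"
    unfolding halfspace_def using gY by (cases e) auto
  also have "\<dots> = g ` {z \<in> Y. d (g z) (g (fst e)) < d (g z) (g (snd e))}" by auto
  also have "\<dots> = g ` halfspace adj Y e" unfolding halfspace_def by (simp add: gdist_aut[OF g])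
  finally show ?thesis .
qed

lemma halfspaces_image:
  assumes g: "graph_aut adj g" and gY: "g ` Y = Y"
  shows "halfspaces adj Y (hyp_image g H) = (\<lambda>W. g ` W) ` halfspaces adj Y H"
  unfolding halfspaces_def hyp_image_def image_comp
  using halfspace_image[OF g gY] by (simp add: comp_def)

lemma deep_image:
  assumes g: "graph_aut adj g"
  shows "deep adj (g ` W) (hyp_image g H) \<longleftrightarrow> deep adj W H"
  unfolding deep_def carrier_image by (simp add: gdist_aut[OF g])

lemma trivial_image:
  assumes g: "graph_aut adj g" and gY: "g ` Y = Y"
  shows "trivial_hyp adj Y (hyp_image g H) \<longleftrightarrow> trivial_hyp adj Y H"
  unfolding trivial_hyp_def halfspaces_image[OF g gY] using deep_image[OF g] by auto

lemma essential_image: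
  assumes g: "graph_aut adj g" and gY: "g ` Y = Y"
  shows "essential_hyp adj Y (hyp_image g H) \<longleftrightarrow> essential_hyp adj Y H"
  unfolding essential_hyp_def halfspaces_image[OF g gY] using deep_image[OF g] by auto

lemma half_essential_image:
  assumes g: "graph_aut adj g" and gY: "g ` Y = Y"
  shows "half_essential_hyp adj Y (hyp_image g H) \<longleftrightarrow> half_essential_hyp adj Y H"
  unfolding half_essential_hyp_def halfspaces_image[OF g gY] using deep_image[OF g] by auto

lemma crosses_image:
  assumes g: "graph_aut adj g" and gY: "g ` Y = Y"
  shows "crosses adj Y (hyp_image g H1) (hyp_image g H2) \<longleftrightarrow> crosses adj Y H1 H2"
proof -
  have i: "inj g" using g unfolding graph_aut_def by (auto simp: bij_is_inj)
  have "g ` W \<inter> g ` W' = g ` (W \<inter> W')" for W W' using i by (simp add: image_Int)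
  then show ?thesis unfolding crosses_def halfspaces_image[OF g gY] by auto
qed

lemma hyperplanes_image:
  assumes g: "graph_aut adj g" and gY: "g ` Y = Y" and H: "H \<in> hyperplanes adj Y"
  shows "hyp_image g H \<in> hyperplanes adj Y"
  using H cls_image[OF g gY] edges_image[OF g gY] unfolding hyperplanes_iff by metis

end

lemma nat_le_sum: "finite A \<Longrightarrow> i \<in> A \<Longrightarrow> (f i :: nat) \<le> sum f A"
  by (rule member_le_sum) auto

lemma int_bound: "finite (S :: int set) \<Longrightarrow> \<exists>N\<ge>0. \<forall>n\<in>S. \<bar>n\<bar> < N"
proof -
  assume S: "finite S"
  have "\<forall>n\<in>S. \<bar>n\<bar> \<le> (\<Sum>m\<in>S. \<bar>m\<bar>)"
    using S by (auto intro!: member_le_sum)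
  moreover have "0 \<le> (\<Sum>m\<in>S. \<bar>m\<bar>)" by (rule sum_nonneg) auto
  ultimately show ?thesis by (intro exI[of _ "1 + (\<Sum>m\<in>S. \<bar>m\<bar>)"]) force
qed

locale ql = mg adj for adj :: "'v \<Rightarrow> 'v \<Rightarrow> bool" +
  fixes G :: "('v \<Rightarrow> 'v) set" and Y :: "'v set" and \<phi> :: "'v \<Rightarrow> 'v" and x0 :: 'v
  assumes lf: "locally_finite adj"
    and AG: "aut_group adj G" and fr: "acts_freely G"
    and Yc: "convex_set adj Y" and phiG: "\<phi> \<in> G" and phinid: "\<phi> \<noteq> id" and phiY: "\<phi> ` Y = Y"
    and orb: "finitely_many_orbits (cyclic_subgroup \<phi>) Y"
    and x0Y: "x0 \<in> Y"
begin

abbreviation P where "P n \<equiv> fpow \<phi> n"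

lemma phi_aut: "graph_aut adj \<phi>" using aut_group_aut[OF AG phiG] .
lemma phi_bij: "bij \<phi>" using phi_aut unfolding graph_aut_def by auto
lemma P_aut: "graph_aut adj (P n)" using aut_group_aut[OF AG aut_group_fpow[OF AG phiG]] .
lemma P_bij: "bij (P n)" using fpow_bij[OF phi_bij] .
lemma P_Y: "P n ` Y = Y" using fpow_image[OF phi_bij phiY] .
lemma P_mem: "y \<in> Y \<Longrightarrow> P n y \<in> Y" using P_Y by blast
lemma P_add: "P (a + b) x = P a (P b x)" using fpow_add_app[OF phi_bij] .
lemma P_neg: "P (- a) (P a x) = x" using fpow_neg_app[OF phi_bij] .
lemma P_neg': "P a (P (- a) x) = x" using fpow_app_neg[OF phi_bij] .
lemma P_d: "d (P n x) (P n y) = d x y" using gdist_aut[OF P_aut] .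
lemma P_comm: "P a (P b x) = P b (P a x)"
  using P_add[of a b x] P_add[of b a x] by (simp add: add.commute)
lemma P_1: "P 1 = \<phi>" by (rule fpow_1)
lemma P_0: "P 0 x = x" by simp

lemma ball_finite: "finite {y. d x y \<le> R}"
proof (induction R)
  case 0
  have "{y. d x y \<le> 0} = {x}" using d_eq0 by auto
  then show ?case by simp
next
  case (Suc R)
  have "{y. d x y \<le> Suc R} \<subseteq> {y. d x y \<le> R} \<union> (\<Union>z\<in>{y. d x y \<le> R}. {w. adj z w})"
  proof
    fix y assume y: "y \<in> {y. d x y \<le> Suc R}"
    show "y \<in> {y. d x y \<le> R} \<union> (\<Union>z\<in>{y. d x y \<le> R}. {w. adj z w})"
    proof (cases "d x y = Suc R")
      case True
      then obtain y' where "walk adj x y' R" "adj y' y" using walk_last d_walk[of x y] by metis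
      then have "d x y' \<le> R" "adj y' y" using d_le by auto
      then show ?thesis by blast
    next
      case False then show ?thesis using y by auto
    qed
  qed
  moreover have "finite (\<Union>z\<in>{y. d x y \<le> R}. {w. adj z w})"
    using Suc lf unfolding locally_finite_def by blast
  ultimately show ?case using Suc finite_subset by blast
qed

definition rr :: nat where "rr = (SOME r. \<forall>y\<in>Y. \<exists>n. d y (P n x0) \<le> r)"

lemma near_ex: "\<exists>r. \<forall>y\<in>Y. \<exists>n. d y (P n x0) \<le> r"
proof -
  obtain F where F: "finite F" "F \<subseteq> Y" "Y \<subseteq> (\<Union>f\<in>F. (\<lambda>g. g f) ` cyclic_subgroup \<phi>)"
    using orb unfolding finitely_many_orbits_def by blast
  have "\<forall>y\<in>Y. \<exists>n. d y (P n x0) \<le> (\<Sum>f\<in>F. d f x0)"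
  proof
    fix y assume "y \<in> Y"
    then obtain f n where fn: "f \<in> F" "y = P n f" using F(3) unfolding cyclic_subgroup_def by blast
    have "d y (P n x0) = d f x0" using fn P_d by simp
    also have "\<dots> \<le> (\<Sum>f\<in>F. d f x0)" using nat_le_sum[OF F(1) fn(1)] .
    finally show "\<exists>n. d y (P n x0) \<le> (\<Sum>f\<in>F. d f x0)" by blast
  qed
  then show ?thesis by blast
qed

lemma near: "y \<in> Y \<Longrightarrow> \<exists>n. d y (P n x0) \<le> rr"
  using someI_ex[OF near_ex] unfolding rr_def by blast

lemma free_phi: "finite S \<Longrightarrow> S \<noteq> {} \<Longrightarrow> \<phi> ` S \<noteq> S"
  using fr phiG phinid unfolding acts_freely_def by blast

lemma no_fixed:
  assumes m: "m \<noteq> 0" shows "P m x \<noteq> x"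
proof
  assume fx: "P m x = x"
  define M where "M = nat \<bar>m\<bar>"
  have M0: "0 < M" using m unfolding M_def by simp
  have PM: "P (int M) x = x"
  proof (cases "0 < m")
    case True then show ?thesis using fx unfolding M_def by simp
  next
    case False
    then have "int M = - m" unfolding M_def by simp
    then show ?thesis using P_neg[of m x] fx by simp
  qed
  define S where "S = (\<lambda>s. P (int s) x) ` {..<M}"
  have fin: "finite S" "S \<noteq> {}" unfolding S_def using M0 by auto
  have step: "\<phi> (P (int s) x) = P (int (Suc s)) x" for s
    using P_add[of 1 "int s" x] P_1 by (simp add: add.commute)
  have "\<phi> ` S = S"
  proof
    show "\<phi> ` S \<subseteq> S"
    proof
      fix z assume "z \<in> \<phi> ` S"
      then obtain s where s: "s < M" "z = \<phi> (P (int s) x)" unfolding S_def by auto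
      show "z \<in> S"
      proof (cases "Suc s < M")
        case True
        have "z = P (int (Suc s)) x" using s step by simp
        then show ?thesis using True unfolding S_def by (intro image_eqI[of _ _ "Suc s"]) auto
      next
        case False
        then have "Suc s = M" using s by simp
        then have "z = P 0 x" using s step PM by simp
        then show ?thesis unfolding S_def using M0 by (intro image_eqI[of _ _ 0]) auto
      qed
    qed
    show "S \<subseteq> \<phi> ` S"
    proof
      fix z assume "z \<in> S"
      then obtain s where s: "s < M" "z = P (int s) x" unfolding S_def by auto
      show "z \<in> \<phi> ` S"
      proof (cases s)
        case 0
        have "M - 1 < M" "Suc (M - 1) = M" using M0 by auto
        then have "\<phi> (P (int (M - 1)) x) = x" using step[of "M - 1"] PM by simp
        moreover have "P (int (M - 1)) x \<in> S" unfolding S_def using M0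
          by (intro imageI) simp
        ultimately show ?thesis using s 0 by force
      next
        case (Suc s')
        have "P (int s') x \<in> S" unfolding S_def using s Suc by auto
        moreover have "\<phi> (P (int s') x) = z" using step[of s'] s Suc by simp
        ultimately show ?thesis by force
      qed
    qed
  qed
  then show False using free_phi fin by blast
qed

lemma div_finite: "finite {n. d x0 (P n x0) \<le> R}"
proof (rule ccontr)
  let ?S = "{n. d x0 (P n x0) \<le> R}"
  assume inf: "infinite ?S"
  have "(\<lambda>n. P n x0) ` ?S \<subseteq> {y. d x0 y \<le> R}" by auto
  then have "finite ((\<lambda>n. P n x0) ` ?S)" using ball_finite finite_subset by blast
  then have "\<not> inj_on (\<lambda>n. P n x0) ?S" using inf finite_imageD by blast
  then obtain n1 n2 where n: "n1 \<noteq> n2" "P n1 x0 = P n2 x0" unfolding inj_on_def by blast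
  have "P (- n2 + n1) x0 = x0" using P_add[of "- n2" n1 x0] n(2) P_neg by simp
  moreover have "- n2 + n1 \<noteq> 0" using n(1) by simp
  ultimately show False using no_fixed by blast
qed

lemma div: "\<exists>N\<ge>0. \<forall>n. N \<le> \<bar>n\<bar> \<longrightarrow> R < d x0 (P n x0)"
proof -
  obtain N where N: "N \<ge> 0" "\<forall>n\<in>{n. d x0 (P n x0) \<le> R}. \<bar>n\<bar> < N"
    using int_bound[OF div_finite[of R]] by blast
  show ?thesis
  proof (intro exI[of _ N] conjI allI impI)
    show "0 \<le> N" by (rule N(1))
    fix n assume n: "N \<le> \<bar>n\<bar>"
    show "R < d x0 (P n x0)"
    proof (rule ccontr)
      assume "\<not> R < d x0 (P n x0)"
      then have "n \<in> {n. d x0 (P n x0) \<le> R}" by simp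
      then show False using N(2) n by force
    qed
  qed
qed

lemma small: "\<exists>M1. \<forall>n. \<bar>n\<bar> < N \<longrightarrow> d x0 (P n x0) \<le> M1"
proof -
  have fin: "finite {n::int. \<bar>n\<bar> < N}"
    by (rule finite_subset[of _ "{-N..N}"]) auto
  show ?thesis
    by (intro exI[of _ "\<Sum>n\<in>{n. \<bar>n\<bar> < N}. d x0 (P n x0)"] allI impI nat_le_sum[OF fin]) simp
qed

lemma Y_unbounded: "\<not> (\<exists>R. \<forall>y\<in>Y. d x0 y \<le> R)"
proof
  assume "\<exists>R. \<forall>y\<in>Y. d x0 y \<le> R"
  then obtain R where "Y \<subseteq> {y. d x0 y \<le> R}" by blast
  then have "finite Y" using ball_finite finite_subset by blast
  then show False using free_phi phiY x0Y by blast
qed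

definition EB :: "('v \<times> 'v) set" where "EB = {e \<in> edges_in adj Y. d x0 (fst e) \<le> rr}"

lemma EB_finite: "finite EB"
proof -
  have "EB \<subseteq> (SIGMA a:{y. d x0 y \<le> rr}. {b. adj a b})"
    unfolding EB_def edges_in_def by auto
  moreover have "finite (SIGMA a:{y. d x0 y \<le> rr}. {b. adj a b})"
    using ball_finite lf unfolding locally_finite_def by blast
  ultimately show ?thesis using finite_subset by blast
qed

lemma mp_comp: "map_prod (P a) (P a) (map_prod (P b) (P b) x) = map_prod (P (a + b)) (P (a + b)) x"
  by (cases x) (simp add: P_add)

lemma mp_neg: "map_prod (P a) (P a) (map_prod (P (- a)) (P (- a)) x) = x"
  by (cases x) (simp add: P_neg')

lemma hyp_image_P: "hyp_image (P a) (hyp_image (P b) H) = hyp_image (P (a + b)) H"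
  unfolding hyp_image_def image_comp by (rule image_cong) (auto simp: mp_comp)

lemma hyp_image_P0: "hyp_image (P 0) H = H" by simp

lemma rep:
  assumes H: "H \<in> hyperplanes adj Y"
  shows "\<exists>n e0. e0 \<in> EB \<and> H = hyp_image (P n) (cls Y e0)"
proof -
  obtain e where e: "e \<in> edges_in adj Y" "H = cls Y e" using H hyperplanes_iff by blast
  have "fst e \<in> Y" using edges_inD[OF e(1)] by blast
  then obtain n where n: "d (fst e) (P n x0) \<le> rr" using near by blast
  define e0 where "e0 = map_prod (P (- n)) (P (- n)) e"
  have e0E: "e0 \<in> edges_in adj Y" unfolding e0_def by (rule edges_image[OF P_aut P_Y e(1)])
  have "d x0 (fst e0) = d (P n x0) (P n (fst e0))" using P_d by simp
  also have "P n (fst e0) = fst e" unfolding e0_def by (cases e) (simp add: P_neg')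
  finally have "d x0 (fst e0) \<le> rr" using n d_sym by simp
  then have "e0 \<in> EB" unfolding EB_def using e0E by simp
  moreover have "hyp_image (P n) (cls Y e0) = cls Y e"
    using cls_image[OF P_aut P_Y] mp_neg unfolding e0_def by simp
  ultimately show ?thesis using e(2) by metis
qed

end

lemma finite_bound:
  assumes S: "finite S" and ex: "\<And>s. s \<in> S \<Longrightarrow> \<exists>K::nat. Q s K"
    and mono: "\<And>s K K'. Q s K \<Longrightarrow> K \<le> K' \<Longrightarrow> Q s K'"
  shows "\<exists>K. \<forall>s\<in>S. Q s K"
proof -
  define k where "k s = (SOME K. Q s K)" for s
  have "Q s (k s)" if "s \<in> S" for s unfolding k_def using ex[OF that] by (rule someI_ex)
  moreover have "k s \<le> sum k S" if "s \<in> S" for s using nat_le_sum[OF S that] .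
  ultimately show ?thesis using mono by blast
qed

context ql
begin

lemma not_deep: "\<not> deep adj W H \<Longrightarrow> \<exists>R. \<forall>z\<in>W. \<exists>c\<in>carrier H. d z c < R"
  unfolding deep_def by (auto simp: not_le)

lemma KL:
  assumes H: "H \<in> hyperplanes adj Y" and unb: "\<not> (\<exists>R. \<forall>c\<in>carrier H. d x0 c \<le> R)"
  shows "\<exists>m. m \<noteq> 0 \<and> hyp_image (P m) H = H"
proof -
  obtain e where e: "e \<in> edges_in adj Y" "H = cls Y e" using H hyperplanes_iff by blast
  define NS where "NS = {n. \<exists>f\<in>H. d (fst f) (P n x0) \<le> rr}"
  have inf: "infinite NS"
  proof
    assume fin: "finite NS"
    define R where "R = rr + (\<Sum>n\<in>NS. d x0 (P n x0))"
    have "\<forall>c\<in>carrier H. d x0 c \<le> R"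
    proof
      fix c assume c: "c \<in> carrier H"
      then obtain f where f: "f \<in> H" "c = fst f" unfolding carrier_def by blast
      have "c \<in> Y" using c carrier_cls_sub e(2) by blast
      then obtain n where n: "d c (P n x0) \<le> rr" using near by blast
      have nNS: "n \<in> NS" unfolding NS_def using f n by blast
      have "d x0 c \<le> d x0 (P n x0) + d (P n x0) c" by (rule d_tri)
      also have "\<dots> \<le> (\<Sum>n\<in>NS. d x0 (P n x0)) + rr"
        using nat_le_sum[OF fin nNS, of "\<lambda>n. d x0 (P n x0)"] n d_sym by (metis add_mono)
      finally show "d x0 c \<le> R" unfolding R_def by simp
    qed
    then show False using unb by blast
  qed
  define fn where "fn n = (SOME f. f \<in> H \<and> d (fst f) (P n x0) \<le> rr)" for n
  have fn: "fn n \<in> H \<and> d (fst (fn n)) (P n x0) \<le> rr" if "n \<in> NS" for n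
  proof -
    have "\<exists>f. f \<in> H \<and> d (fst f) (P n x0) \<le> rr" using that unfolding NS_def by blast
    then show ?thesis unfolding fn_def by (rule someI_ex)
  qed
  define h where "h n = map_prod (P (- n)) (P (- n)) (fn n)" for n
  have HE: "H \<subseteq> edges_in adj Y" using e(2) unfolding cls_def by blast
  have hEB: "h n \<in> EB" if "n \<in> NS" for n
  proof -
    have fE: "fn n \<in> edges_in adj Y" using fn[OF that] HE by blast
    have hE: "h n \<in> edges_in adj Y" unfolding h_def by (rule edges_image[OF P_aut P_Y fE])
    have "d x0 (fst (h n)) = d (P n x0) (P n (fst (h n)))" using P_d by simp
    also have "P n (fst (h n)) = fst (fn n)" unfolding h_def by (cases "fn n") (simp add: P_neg')
    finally have "d x0 (fst (h n)) \<le> rr" using fn[OF that] d_sym by simp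
    then show ?thesis unfolding EB_def using hE by simp
  qed
  then have "h ` NS \<subseteq> EB" by blast
  then have "finite (h ` NS)" using EB_finite finite_subset by blast
  then have "\<not> inj_on h NS" using inf finite_imageD by blast
  then obtain n1 n2 where n: "n1 \<in> NS" "n2 \<in> NS" "n1 \<noteq> n2" "h n1 = h n2"
    unfolding inj_on_def by blast
  have f1: "fn n1 = map_prod (P n1) (P n1) (h n1)" unfolding h_def by (simp add: mp_neg)
  have f2: "fn n2 = map_prod (P n2) (P n2) (h n2)" unfolding h_def by (simp add: mp_neg)
  have c1: "cls Y (fn n1) = H" using cls_eq[OF e(1)] fn[OF n(1)] e(2) by simp
  have c2: "cls Y (fn n2) = H" using cls_eq[OF e(1)] fn[OF n(2)] e(2) by simp
  have "hyp_image (P (n2 - n1)) H = cls Y (map_prod (P (n2 - n1)) (P (n2 - n1)) (fn n1))"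
    using cls_image[OF P_aut P_Y] c1 by metis
  also have "map_prod (P (n2 - n1)) (P (n2 - n1)) (fn n1) = fn n2"
    using f1 f2 n(4) mp_comp by simp
  finally have "hyp_image (P (n2 - n1)) H = H" using c2 by simp
  moreover have "n2 - n1 \<noteq> 0" using n(3) by simp
  ultimately show ?thesis by blast
qed

lemma inv_near:
  assumes H: "H \<in> hyperplanes adj Y" and m: "m \<noteq> 0" and inv: "hyp_image (P m) H = H"
  shows "\<exists>R. \<forall>y\<in>Y. \<exists>c\<in>carrier H. d y c \<le> R"
proof -
  obtain e where e: "e \<in> edges_in adj Y" "H = cls Y e" using H hyperplanes_iff by blast
  define C where "C = carrier H"
  define c0 where "c0 = fst e"
  have c0: "c0 \<in> C" unfolding C_def c0_def e(2) by (rule carrier_cls_mem[OF e(1)])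
  define M where "M = \<bar>m\<bar>"
  have M0: "0 < M" using m unfolding M_def by simp
  have Cm: "P m ` C = C" using carrier_image[of "P m" H] inv unfolding C_def by simp
  have Cneg: "P (- a) ` C = C" if "P a ` C = C" for a
  proof -
    have "P (- a) ` (P a ` C) = C" by (simp add: image_comp comp_def P_neg)
    then show ?thesis using that by simp
  qed
  have CM: "P M ` C = C"
  proof (cases "0 < m")
    case True then show ?thesis using Cm unfolding M_def by simp
  next
    case False then have "M = - m" unfolding M_def by simp
    then show ?thesis using Cneg[OF Cm] by simp
  qed
  have CMn: "P (- M) ` C = C" using Cneg[OF CM] .
  have all: "P (q * M) c0 \<in> C" for q
  proof (induction q rule: int_induct[where k = 0])
    case base then show ?case using c0 by simp
  next
    case (step1 i)
    have "P ((i + 1) * M) c0 = P M (P (i * M) c0)" using P_add[of M "i * M" c0]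
      by (simp add: algebra_simps)
    then show ?case using step1(2) CM by auto
  next
    case (step2 i)
    have "P ((i - 1) * M) c0 = P (- M) (P (i * M) c0)" using P_add[of "- M" "i * M" c0]
      by (simp add: algebra_simps)
    then show ?case using step2(2) CMn by auto
  qed
  have finM: "finite {0..<M}" by simp
  define R0 where "R0 = (\<Sum>s\<in>{0..<M}. d (P s x0) c0)"
  show ?thesis
  proof (intro exI[of _ "rr + R0"] ballI)
    fix y assume y: "y \<in> Y"
    obtain n where n: "d y (P n x0) \<le> rr" using near[OF y] by blast
    define q where "q = n div M"
    define s where "s = n mod M"
    have ns: "n = q * M + s" unfolding q_def s_def by simp
    have s: "s \<in> {0..<M}" unfolding s_def using M0 by simp
    have "P n x0 = P (q * M) (P s x0)" using ns P_add by simp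
    then have "d (P n x0) (P (q * M) c0) = d (P s x0) c0" using P_d by simp
    also have "\<dots> \<le> R0" unfolding R0_def by (rule nat_le_sum[OF finM s])
    finally have "d y (P (q * M) c0) \<le> rr + R0" using n d_tri[of y "P (q * M) c0" "P n x0"] by simp
    then show "\<exists>c\<in>carrier H. d y c \<le> rr + R0" using all[of q] unfolding C_def by blast
  qed
qed

lemma halfspaces_sub: "W \<in> halfspaces adj Y H \<Longrightarrow> W \<subseteq> Y"
  unfolding halfspaces_def using half_sub by blast

lemma near_trivial:
  assumes near: "\<exists>R. \<forall>y\<in>Y. \<exists>c\<in>carrier H. d y c \<le> R"
  shows "trivial_hyp adj Y H"
  unfolding trivial_hyp_def
proof
  fix W assume W: "W \<in> halfspaces adj Y H"
  obtain R where R: "\<forall>y\<in>Y. \<exists>c\<in>carrier H. d y c \<le> R" using near by blast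
  show "\<not> deep adj W H"
  proof
    assume "deep adj W H"
    then obtain z where z: "z \<in> W" "\<forall>c\<in>carrier H. Suc R \<le> d z c" unfolding deep_def by blast
    have "z \<in> Y" using z(1) halfspaces_sub[OF W] by blast
    then obtain c where "c \<in> carrier H" "d z c \<le> R" using R by blast
    then show False using z(2) by fastforce
  qed
qed

lemma nontriv_bounded:
  assumes H: "H \<in> hyperplanes adj Y" and nt: "\<not> trivial_hyp adj Y H"
  shows "\<exists>R. \<forall>c\<in>carrier H. d x0 c \<le> R"
proof (rule ccontr)
  assume "\<not> (\<exists>R. \<forall>c\<in>carrier H. d x0 c \<le> R)"
  then obtain m where "m \<noteq> 0" "hyp_image (P m) H = H" using KL[OF H] by blast
  then have "trivial_hyp adj Y H" using near_trivial inv_near[OF H] by blast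
  then show False using nt by blast
qed

lemma trivial_unbounded:
  assumes H: "H \<in> hyperplanes adj Y" and t: "trivial_hyp adj Y H"
  shows "\<not> (\<exists>R. \<forall>c\<in>carrier H. d x0 c \<le> R)"
proof
  assume "\<exists>R. \<forall>c\<in>carrier H. d x0 c \<le> R"
  then obtain R where R: "\<forall>c\<in>carrier H. d x0 c \<le> R" by blast
  obtain e where e: "e \<in> edges_in adj Y" "H = cls Y e" using H hyperplanes_iff by blast
  have hs: "halfspaces adj Y H = {halfspace adj Y e, halfspace adj Y (rv e)}"
    using halfspaces_cls[OF e(1)] e(2) by simp
  have "\<not> deep adj (halfspace adj Y e) H" "\<not> deep adj (halfspace adj Y (rv e)) H"
    using t hs unfolding trivial_hyp_def by auto
  then obtain R1 R2 where R1: "\<forall>z\<in>halfspace adj Y e. \<exists>c\<in>carrier H. d z c < R1"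
    and R2: "\<forall>z\<in>halfspace adj Y (rv e). \<exists>c\<in>carrier H. d z c < R2"
    using not_deep by metis
  have "\<forall>y\<in>Y. d x0 y \<le> R + R1 + R2"
  proof
    fix y assume y: "y \<in> Y"
    obtain c where c: "c \<in> carrier H" "d y c < R1 + R2"
      using half_cover[OF e(1) y] R1 R2 by fastforce
    have "d x0 y \<le> d x0 c + d c y" by (rule d_tri)
    then show "d x0 y \<le> R + R1 + R2" using R c d_sym[of c y] by fastforce
  qed
  then show False using Y_unbounded by blast
qed

end

context ql
begin

lemma EB_edges: "e0 \<in> EB \<Longrightarrow> e0 \<in> edges_in adj Y"
  unfolding EB_def by simp

lemma EB_hyp: "e0 \<in> EB \<Longrightarrow> cls Y e0 \<in> hyperplanes adj Y"
  using EB_edges hyperplanes_iff by blast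

lemma part1: "\<exists>D::nat. \<forall>H\<in>hyperplanes adj Y. \<not> trivial_hyp adj Y H \<longrightarrow>
  (\<forall>c\<in>carrier H. \<forall>c'\<in>carrier H. d c c' \<le> D)"
proof -
  let ?Q = "\<lambda>e0 D. \<not> trivial_hyp adj Y (cls Y e0) \<longrightarrow>
     (\<forall>c\<in>carrier (cls Y e0). \<forall>c'\<in>carrier (cls Y e0). d c c' \<le> D)"
  have "\<exists>D. \<forall>e0\<in>EB. ?Q e0 D"
  proof (rule finite_bound[OF EB_finite])
    fix e0 assume e0: "e0 \<in> EB"
    show "\<exists>D. ?Q e0 D"
    proof (cases "trivial_hyp adj Y (cls Y e0)")
      case True then show ?thesis by blast
    next
      case False
      then obtain R where R: "\<forall>c\<in>carrier (cls Y e0). d x0 c \<le> R"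
        using nontriv_bounded[OF EB_hyp[OF e0]] by blast
      have "d c c' \<le> R + R" if "c \<in> carrier (cls Y e0)" "c' \<in> carrier (cls Y e0)" for c c'
      proof -
        have "d c c' \<le> d c x0 + d x0 c'" by (rule d_tri)
        moreover have "d x0 c \<le> R" "d x0 c' \<le> R" using R that by auto
        ultimately show ?thesis using d_sym[of c x0] by linarith
      qed
      then show ?thesis by blast
    qed
  next
    fix s K K' assume QK: "?Q s K" and KK: "K \<le> (K'::nat)"
    show "?Q s K'"
    proof (intro impI ballI)
      fix c c' assume "\<not> trivial_hyp adj Y (cls Y s)" "c \<in> carrier (cls Y s)" "c' \<in> carrier (cls Y s)"
      then have "d c c' \<le> K" using QK by blast
      then show "d c c' \<le> K'" using KK by simp
    qed
  qed
  then obtain D where D: "\<forall>e0\<in>EB. ?Q e0 D" by blast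
  show ?thesis
  proof (intro exI[of _ D] ballI impI)
    fix H c c' assume H: "H \<in> hyperplanes adj Y" and nt: "\<not> trivial_hyp adj Y H"
      and c: "c \<in> carrier H" and c': "c' \<in> carrier H"
    obtain n e0 where ne: "e0 \<in> EB" "H = hyp_image (P n) (cls Y e0)" using rep[OF H] by blast
    have nt0: "\<not> trivial_hyp adj Y (cls Y e0)" using nt ne(2) trivial_image[OF P_aut P_Y] by simp
    have "c \<in> P n ` carrier (cls Y e0)" using c unfolding ne(2) carrier_image .
    then obtain a where a1: "c = P n a" "a \<in> carrier (cls Y e0)" by (rule imageE)
    have "c' \<in> P n ` carrier (cls Y e0)" using c' unfolding ne(2) carrier_image .
    then obtain a' where a2: "c' = P n a'" "a' \<in> carrier (cls Y e0)" by (rule imageE)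
    have a: "a \<in> carrier (cls Y e0)" "c = P n a" "a' \<in> carrier (cls Y e0)" "c' = P n a'"
      using a1 a2 by auto
    have "d c c' = d a a'" using a P_d by simp
    then show "d c c' \<le> D" using D ne(1) nt0 a by simp
  qed
qed

lemma shallow_bd:
  assumes H: "H \<in> hyperplanes adj Y" and nt: "\<not> trivial_hyp adj Y H" and nd: "\<not> deep adj W H"
  shows "\<exists>K. \<forall>z\<in>W. \<forall>z'\<in>W. d z z' \<le> K"
proof -
  obtain R where R: "\<forall>c\<in>carrier H. d x0 c \<le> R" using nontriv_bounded[OF H nt] by blast
  obtain Ra where Ra: "\<forall>z\<in>W. \<exists>c\<in>carrier H. d z c < Ra" using not_deep[OF nd] by blast
  have b: "d x0 z \<le> R + Ra" if "z \<in> W" for z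
  proof -
    have "\<exists>c\<in>carrier H. d z c < Ra" using Ra that by (rule bspec)
    then obtain c where c: "c \<in> carrier H" "d z c < Ra" by (rule bexE)
    have "d x0 z \<le> d x0 c + d c z" by (rule d_tri)
    moreover have "d x0 c \<le> R" using R c(1) by blast
    moreover have "d c z = d z c" by (rule d_sym)
    ultimately show ?thesis using c(2) by linarith
  qed
  have "d z z' \<le> (R + Ra) + (R + Ra)" if "z \<in> W" "z' \<in> W" for z z'
  proof -
    have "d z z' \<le> d z x0 + d x0 z'" by (rule d_tri)
    moreover have "d z x0 = d x0 z" by (rule d_sym)
    ultimately show ?thesis using b[OF that(1)] b[OF that(2)] by linarith
  qed
  then show ?thesis by (intro exI[of _ "(R + Ra) + (R + Ra)"] ballI)
qed

lemma part2: "\<exists>K::nat. \<forall>H\<in>hyperplanes adj Y. half_essential_hyp adj Y H \<longrightarrow>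
  (\<forall>W\<in>halfspaces adj Y H. \<not> deep adj W H \<longrightarrow> (\<forall>z\<in>W. \<forall>z'\<in>W. d z z' \<le> K))"
proof -
  let ?Q = "\<lambda>e0 K. half_essential_hyp adj Y (cls Y e0) \<longrightarrow>
     (\<forall>W\<in>halfspaces adj Y (cls Y e0). \<not> deep adj W (cls Y e0) \<longrightarrow> (\<forall>z\<in>W. \<forall>z'\<in>W. d z z' \<le> K))"
  have "\<exists>K. \<forall>e0\<in>EB. ?Q e0 K"
  proof (rule finite_bound[OF EB_finite])
    fix e0 assume e0: "e0 \<in> EB"
    show "\<exists>K. ?Q e0 K"
    proof (cases "half_essential_hyp adj Y (cls Y e0)")
      case False then show ?thesis by blast
    next
      case True
      then have nt: "\<not> trivial_hyp adj Y (cls Y e0)"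
        unfolding half_essential_hyp_def trivial_hyp_def by blast
      have fin: "finite (halfspaces adj Y (cls Y e0))"
        using halfspaces_cls[OF EB_edges[OF e0]] by simp
      have "\<exists>K. \<forall>W\<in>halfspaces adj Y (cls Y e0). \<not> deep adj W (cls Y e0) \<longrightarrow> (\<forall>z\<in>W. \<forall>z'\<in>W. d z z' \<le> K)"
      proof (rule finite_bound[OF fin])
        fix W
        show "\<exists>K. \<not> deep adj W (cls Y e0) \<longrightarrow> (\<forall>z\<in>W. \<forall>z'\<in>W. d z z' \<le> K)"
          using shallow_bd[OF EB_hyp[OF e0] nt] by blast
      next
        fix s K K' assume QK: "\<not> deep adj s (cls Y e0) \<longrightarrow> (\<forall>z\<in>s. \<forall>z'\<in>s. d z z' \<le> K)" and KK: "K \<le> (K'::nat)"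
        show "\<not> deep adj s (cls Y e0) \<longrightarrow> (\<forall>z\<in>s. \<forall>z'\<in>s. d z z' \<le> K')"
        proof (intro impI ballI)
          fix z z' assume "\<not> deep adj s (cls Y e0)" "z \<in> s" "z' \<in> s"
          then have "d z z' \<le> K" using QK by blast
          then show "d z z' \<le> K'" using KK by simp
        qed
      qed
      then show ?thesis by blast
    qed
  next
    fix s K K' assume QK: "?Q s K" and KK: "K \<le> (K'::nat)"
    show "?Q s K'"
    proof (intro impI ballI)
      fix W z z' assume "half_essential_hyp adj Y (cls Y s)" "W \<in> halfspaces adj Y (cls Y s)"
        "\<not> deep adj W (cls Y s)" "z \<in> W" "z' \<in> W"
      then have "d z z' \<le> K" using QK by blast
      then show "d z z' \<le> K'" using KK by simp
    qed
  qed
  then obtain K where K: "\<forall>e0\<in>EB. ?Q e0 K" by blast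
  show ?thesis
  proof (intro exI[of _ K] ballI impI)
    fix H W z z' assume H: "H \<in> hyperplanes adj Y" and he: "half_essential_hyp adj Y H"
      and W: "W \<in> halfspaces adj Y H" and nd: "\<not> deep adj W H" and z: "z \<in> W" and z': "z' \<in> W"
    obtain n e0 where ne: "e0 \<in> EB" "H = hyp_image (P n) (cls Y e0)" using rep[OF H] by blast
    have he0: "half_essential_hyp adj Y (cls Y e0)" using he ne(2) half_essential_image[OF P_aut P_Y] by simp
    have "W \<in> (\<lambda>W. P n ` W) ` halfspaces adj Y (cls Y e0)"
      using W unfolding ne(2) halfspaces_image[OF P_aut P_Y] .
    then obtain W0 where W0': "W = P n ` W0" "W0 \<in> halfspaces adj Y (cls Y e0)" by (rule imageE)
    then have W0: "W0 \<in> halfspaces adj Y (cls Y e0)" "W = P n ` W0" by auto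
    have nd0: "\<not> deep adj W0 (cls Y e0)" using nd W0(2) ne(2) deep_image[OF P_aut] by simp
    have "z \<in> P n ` W0" "z' \<in> P n ` W0" using z z' W0(2) by auto
    then obtain a a' where a: "a \<in> W0" "z = P n a" "a' \<in> W0" "z' = P n a'" by auto
    have "d z z' = d a a'" using a P_d by simp
    then show "d z z' \<le> K" using K ne(1) he0 W0(1) nd0 a by simp
  qed
qed

lemma orbit_finite:
  assumes H0: "H0 \<in> hyperplanes adj Y" and t: "trivial_hyp adj Y H0"
  shows "finite (range (\<lambda>n. hyp_image (P n) H0))"
proof -
  obtain m where m: "m \<noteq> 0" "hyp_image (P m) H0 = H0"
    using KL[OF H0 trivial_unbounded[OF H0 t]] by blast
  define M where "M = \<bar>m\<bar>"
  have M0: "0 < M" using m unfolding M_def by simp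
  have neg: "hyp_image (P (- a)) H0 = H0" if "hyp_image (P a) H0 = H0" for a
  proof -
    have "hyp_image (P (- a)) (hyp_image (P a) H0) = H0" using hyp_image_P[of "- a" a H0] by simp
    then show ?thesis using that by simp
  qed
  have HM: "hyp_image (P M) H0 = H0"
  proof (cases "0 < m")
    case True then show ?thesis using m unfolding M_def by simp
  next
    case False then have "M = - m" unfolding M_def by simp
    then show ?thesis using neg[OF m(2)] by simp
  qed
  have HMn: "hyp_image (P (- M)) H0 = H0" using neg[OF HM] .
  have all: "hyp_image (P (q * M)) H0 = H0" for q
  proof (induction q rule: int_induct[where k = 0])
    case base then show ?case by (simp only: mult_zero_left fpow_0 hyp_image_id)
  next
    case (step1 i)
    have "hyp_image (P ((i + 1) * M)) H0 = hyp_image (P M) (hyp_image (P (i * M)) H0)"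
      using hyp_image_P[of M "i * M" H0] by (simp add: algebra_simps)
    then show ?case using step1(2) HM by simp
  next
    case (step2 i)
    have "hyp_image (P ((i - 1) * M)) H0 = hyp_image (P (- M)) (hyp_image (P (i * M)) H0)"
      using hyp_image_P[of "- M" "i * M" H0] by (simp add: algebra_simps)
    then show ?case using step2(2) HMn by simp
  qed
  have "range (\<lambda>n. hyp_image (P n) H0) \<subseteq> (\<lambda>s. hyp_image (P s) H0) ` {0..<M}"
  proof
    fix X assume "X \<in> range (\<lambda>n. hyp_image (P n) H0)"
    then obtain n where n: "X = hyp_image (P n) H0" by blast
    define q where "q = n div M"
    define s where "s = n mod M"
    have ns: "n = s + q * M" unfolding q_def s_def by simp
    have s: "s \<in> {0..<M}" unfolding s_def using M0 by simp
    have "X = hyp_image (P s) (hyp_image (P (q * M)) H0)" using n ns hyp_image_P by simp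
    then have "X = hyp_image (P s) H0" using all by simp
    then show "X \<in> (\<lambda>s. hyp_image (P s) H0) ` {0..<M}" using s by blast
  qed
  then show ?thesis using finite_subset by blast
qed

lemma part4: "finite {H \<in> hyperplanes adj Y. trivial_hyp adj Y H}"
proof -
  define T where "T = {e0 \<in> EB. trivial_hyp adj Y (cls Y e0)}"
  have finT: "finite T" unfolding T_def using EB_finite by simp
  have "{H \<in> hyperplanes adj Y. trivial_hyp adj Y H} \<subseteq> (\<Union>e0\<in>T. range (\<lambda>n. hyp_image (P n) (cls Y e0)))"
  proof
    fix H assume "H \<in> {H \<in> hyperplanes adj Y. trivial_hyp adj Y H}"
    then have H: "H \<in> hyperplanes adj Y" "trivial_hyp adj Y H" by auto
    obtain n e0 where ne: "e0 \<in> EB" "H = hyp_image (P n) (cls Y e0)" using rep[OF H(1)] by blast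
    have "trivial_hyp adj Y (cls Y e0)" using H(2) ne(2) trivial_image[OF P_aut P_Y] by simp
    then have "e0 \<in> T" unfolding T_def using ne(1) by simp
    then show "H \<in> (\<Union>e0\<in>T. range (\<lambda>n. hyp_image (P n) (cls Y e0)))" using ne(2) by blast
  qed
  moreover have "finite (\<Union>e0\<in>T. range (\<lambda>n. hyp_image (P n) (cls Y e0)))"
    using finT orbit_finite EB_hyp unfolding T_def by blast
  ultimately show ?thesis using finite_subset by blast
qed

end

context ql
begin

lemma cls_rv: "e \<in> edges_in adj Y \<Longrightarrow> cls Y (rv e) = cls Y e"
  using cls_eq rv_cls by blast

lemma cross_sym:
  assumes e: "e \<in> edges_in adj Y" and z: "z \<in> halfspace adj Y (rv e)" and z': "z' \<in> halfspace adj Y e"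
  shows "\<exists>c\<in>carrier (cls Y e). c \<in> interval adj z z'"
proof -
  have re: "rv e \<in> edges_in adj Y" using rv_edges[OF e] .
  have "z' \<in> halfspace adj Y (rv (rv e))" using z' by simp
  then have "\<exists>c\<in>carrier (cls Y (rv e)). c \<in> interval adj z z'" using cross_Y[OF Yc re z] by blast
  then show ?thesis using cls_rv[OF e] by simp
qed

lemma same_side:
  assumes e: "e \<in> edges_in adj Y" and z: "z \<in> Y" and z': "z' \<in> Y"
    and far: "\<forall>c\<in>carrier (cls Y e). d z z' < d z c"
  shows "z \<in> halfspace adj Y e \<longleftrightarrow> z' \<in> halfspace adj Y e"
proof
  assume zA: "z \<in> halfspace adj Y e"
  show "z' \<in> halfspace adj Y e"
  proof (rule ccontr)
    assume "z' \<notin> halfspace adj Y e"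
    then have "z' \<in> halfspace adj Y (rv e)" using half_cover[OF e z'] by blast
    then obtain c where c: "c \<in> carrier (cls Y e)" "c \<in> interval adj z z'"
      using cross_Y[OF Yc e zA] by blast
    have "d z c \<le> d z z'" using c(2) unfolding interval_def by simp
    then show False using far c(1) by fastforce
  qed
next
  assume zA: "z' \<in> halfspace adj Y e"
  show "z \<in> halfspace adj Y e"
  proof (rule ccontr)
    assume "z \<notin> halfspace adj Y e"
    then have "z \<in> halfspace adj Y (rv e)" using half_cover[OF e z] by blast
    then obtain c where c: "c \<in> carrier (cls Y e)" "c \<in> interval adj z z'"
      using cross_sym[OF e _ zA] by blast
    have "d z c \<le> d z z'" using c(2) unfolding interval_def by simp
    then show False using far c(1) by fastforce
  qed
qed

lemma crossesD:
  assumes e: "e \<in> edges_in adj Y" and f: "f \<in> edges_in adj Y" and cr: "crosses adj Y (cls Y e) (cls Y f)"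
  shows "halfspace adj Y e \<inter> halfspace adj Y f \<noteq> {}" "halfspace adj Y e \<inter> halfspace adj Y (rv f) \<noteq> {}"
    "halfspace adj Y (rv e) \<inter> halfspace adj Y f \<noteq> {}" "halfspace adj Y (rv e) \<inter> halfspace adj Y (rv f) \<noteq> {}"
  using cr unfolding crosses_def halfspaces_cls[OF e] halfspaces_cls[OF f] by auto

lemma carrier_in_half:
  assumes e: "e \<in> edges_in adj Y" and f: "f \<in> edges_in adj Y"
    and h1: "halfspace adj Y e \<inter> halfspace adj Y f \<noteq> {}" and h2: "halfspace adj Y e \<inter> halfspace adj Y (rv f) \<noteq> {}"
  shows "\<exists>c\<in>carrier (cls Y f). c \<in> halfspace adj Y e"
proof -
  obtain z1 where z1: "z1 \<in> halfspace adj Y e" "z1 \<in> halfspace adj Y f" using h1 by blast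
  obtain z2 where z2: "z2 \<in> halfspace adj Y e" "z2 \<in> halfspace adj Y (rv f)" using h2 by blast
  obtain c where c: "c \<in> carrier (cls Y f)" "c \<in> interval adj z1 z2" using cross_Y[OF Yc f z1(2) z2(2)] by blast
  have "c \<in> halfspace adj Y e" using half_convex[OF Yc e z1(1) z2(1) c(2)] .
  then show ?thesis using c(1) by blast
qed

lemma cross_carriers:
  assumes e: "e \<in> edges_in adj Y" and f: "f \<in> edges_in adj Y" and cr: "crosses adj Y (cls Y e) (cls Y f)"
  shows "\<exists>c1\<in>carrier (cls Y f). \<exists>c2\<in>carrier (cls Y f). \<exists>c''\<in>carrier (cls Y e). d c1 c'' \<le> d c1 c2"
proof -
  note h = crossesD[OF e f cr]
  obtain c1 where c1: "c1 \<in> carrier (cls Y f)" "c1 \<in> halfspace adj Y e"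
    using carrier_in_half[OF e f h(1) h(2)] by blast
  have re: "rv e \<in> edges_in adj Y" using rv_edges[OF e] .
  obtain c2 where c2: "c2 \<in> carrier (cls Y f)" "c2 \<in> halfspace adj Y (rv e)"
    using carrier_in_half[OF re f h(3) h(4)] by blast
  obtain c'' where c'': "c'' \<in> carrier (cls Y e)" "c'' \<in> interval adj c1 c2"
    using cross_Y[OF Yc e c1(2) c2(2)] by blast
  have "d c1 c'' \<le> d c1 c2" using c''(2) unfolding interval_def by simp
  then show ?thesis using c1(1) c2(1) c''(1) by blast
qed


lemma delta_b: "d (P k x0) (P n (P k x0)) = d x0 (P n x0)"
  using P_comm[of n k x0] P_d[of k x0 "P n x0"] by simp

lemma near_b: "y \<in> Y \<Longrightarrow> \<exists>n. d y (P n (P k x0)) \<le> rr"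
proof -
  assume y: "y \<in> Y"
  obtain n where n: "d y (P n x0) \<le> rr" using near[OF y] by blast
  have "P (n - k) (P k x0) = P n x0" using P_add[of "n - k" k x0] by simp
  then show ?thesis using n by metis
qed

lemma delta_neg1: "d x0 (P (-1) x0) = d x0 (P 1 x0)"
proof -
  have "d x0 (P (-1) x0) = d (P 1 x0) (P 1 (P (-1) x0))" using P_d by simp
  also have "P 1 (P (-1) x0) = x0" using P_neg'[of 1 x0] by simp
  finally show ?thesis by (simp add: d_sym)
qed

lemma orient:
  fixes N1 :: int and R0 M1 :: nat and b :: 'v
  assumes b: "b \<in> Y" and hb: "\<forall>n. d b (P n b) = d x0 (P n x0)"
    and nb: "\<forall>y\<in>Y. \<exists>n. d y (P n b) \<le> rr"
    and N10: "0 \<le> N1"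
    and N1: "\<forall>n. N1 \<le> \<bar>n\<bar> \<longrightarrow> R0 + d x0 (P 1 x0) < d x0 (P n x0)"
    and M1: "\<forall>n. \<bar>n\<bar> < N1 \<longrightarrow> d x0 (P n x0) \<le> M1"
    and e: "e \<in> edges_in adj Y" and ess: "essential_hyp adj Y (cls Y e)"
    and Cb: "\<forall>c\<in>carrier (cls Y e). d b c \<le> R0"
  shows "\<exists>ep. ep \<in> edges_in adj Y \<and> cls Y ep = cls Y e \<and>
    (\<forall>n. N1 \<le> n \<longrightarrow> P n b \<in> halfspace adj Y ep) \<and> (\<forall>n. n \<le> - N1 \<longrightarrow> P n b \<in> halfspace adj Y (rv ep))"
proof -
  define C where "C = carrier (cls Y e)"
  define A where "A = halfspace adj Y e"
  define L where "L = d x0 (P 1 x0)"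
  have Pb: "P n b \<in> Y" for n using P_mem b by blast
  have farC: "L < d (P n b) c" if n: "N1 \<le> \<bar>n\<bar>" and c: "c \<in> C" for n c
  proof -
    have "d b (P n b) \<le> d b c + d c (P n b)" by (rule d_tri)
    moreover have "d b (P n b) = d x0 (P n x0)" using hb by blast
    moreover have "R0 + L < d x0 (P n x0)" using N1 n unfolding L_def by blast
    moreover have "d b c \<le> R0" using Cb c unfolding C_def by blast
    moreover have "d c (P n b) = d (P n b) c" by (rule d_sym)
    ultimately show ?thesis by linarith
  qed
  have step_up: "P i b \<in> A \<longleftrightarrow> P (i + 1) b \<in> A" if i: "N1 \<le> \<bar>i\<bar>" for i
  proof -
    have eq: "P (i + 1) b = P i (P 1 b)" using P_add[of i 1 b] by simp
    have "d (P i b) (P (i + 1) b) = L" unfolding eq P_d using hb unfolding L_def by blast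
    then have "\<forall>c\<in>carrier (cls Y e). d (P i b) (P (i + 1) b) < d (P i b) c"
      using farC[OF i] unfolding C_def by simp
    then show ?thesis unfolding A_def by (rule same_side[OF e Pb Pb])
  qed
  have step_down: "P i b \<in> A \<longleftrightarrow> P (i - 1) b \<in> A" if i: "N1 \<le> \<bar>i\<bar>" for i
  proof -
    have eq: "P (i - 1) b = P i (P (-1) b)" using P_add[of i "-1" b] by simp
    have "d (P i b) (P (i - 1) b) = L" unfolding eq P_d using hb delta_neg1 unfolding L_def by metis
    then have "\<forall>c\<in>carrier (cls Y e). d (P i b) (P (i - 1) b) < d (P i b) c"
      using farC[OF i] unfolding C_def by simp
    then show ?thesis unfolding A_def by (rule same_side[OF e Pb Pb])
  qed
  have up: "N1 \<le> n \<longrightarrow> (P n b \<in> A \<longleftrightarrow> P N1 b \<in> A)" for n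
  proof (induction n rule: int_induct[where k = N1])
    case base then show ?case by simp
  next
    case (step1 i)
    then show ?case using step_up[of i] N10 by simp
  next
    case (step2 i) then show ?case by simp
  qed
  have down: "n \<le> - N1 \<longrightarrow> (P n b \<in> A \<longleftrightarrow> P (- N1) b \<in> A)" for n
  proof (induction n rule: int_induct[where k = "- N1"])
    case base then show ?case by simp
  next
    case (step1 i) then show ?case by simp
  next
    case (step2 i)
    then show ?case using step_down[of i] N10 by simp
  qed
  have c0: "fst e \<in> C" unfolding C_def by (rule carrier_cls_mem[OF e])
  have deep_side: "\<exists>n. N1 \<le> \<bar>n\<bar> \<and> P n b \<in> halfspace adj Y f"
    if f: "f \<in> edges_in adj Y" "cls Y f = cls Y e" "deep adj (halfspace adj Y f) (cls Y e)" for f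
  proof -
    define R where "R = rr + R0 + M1 + 1"
    obtain z where z: "z \<in> halfspace adj Y f" "\<forall>c\<in>C. R \<le> d z c"
      using f(3) unfolding deep_def C_def by blast
    have zY: "z \<in> Y" using z(1) half_sub by blast
    obtain n where n: "d z (P n b) \<le> rr" using nb zY by blast
    have "\<forall>c\<in>carrier (cls Y f). d z (P n b) < d z c"
      using z(2) n f(2) unfolding R_def C_def by fastforce
    then have "z \<in> halfspace adj Y f \<longleftrightarrow> P n b \<in> halfspace adj Y f" by (rule same_side[OF f(1) zY Pb])
    then have "P n b \<in> halfspace adj Y f" using z(1) by simp
    moreover have "N1 \<le> \<bar>n\<bar>"
    proof (rule ccontr)
      assume "\<not> N1 \<le> \<bar>n\<bar>"
      then have "d x0 (P n x0) \<le> M1" using M1 by simp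
      then have "d b (P n b) \<le> M1" using hb by simp
      moreover have "d z (fst e) \<le> d z (P n b) + d (P n b) (fst e)" by (rule d_tri)
      moreover have "d (P n b) (fst e) \<le> d (P n b) b + d b (fst e)" by (rule d_tri)
      moreover have "d b (fst e) \<le> R0" using Cb c0 unfolding C_def by blast
      moreover have "R \<le> d z (fst e)" using z(2) c0 by blast
      moreover have "d (P n b) b = d b (P n b)" by (rule d_sym)
      ultimately show False using n unfolding R_def by linarith
    qed
    ultimately show ?thesis by blast
  qed
  have hs: "halfspaces adj Y (cls Y e) = {halfspace adj Y e, halfspace adj Y (rv e)}"
    using halfspaces_cls[OF e] .
  have deepA: "deep adj (halfspace adj Y e) (cls Y e)" using ess hs unfolding essential_hyp_def by blast
  have deepA': "deep adj (halfspace adj Y (rv e)) (cls Y e)" using ess hs unfolding essential_hyp_def by blast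
  have re: "rv e \<in> edges_in adj Y" using rv_edges[OF e] .
  obtain nA where nA: "N1 \<le> \<bar>nA\<bar>" "P nA b \<in> A"
    using deep_side[OF e refl deepA] unfolding A_def by blast
  obtain nB where nB: "N1 \<le> \<bar>nB\<bar>" "P nB b \<in> halfspace adj Y (rv e)"
    using deep_side[OF re cls_rv[OF e] deepA'] by blast
  have disj: "x \<notin> A" if "x \<in> halfspace adj Y (rv e)" for x
    using half_disj[OF e] that unfolding A_def by blast
  have cov: "x \<in> halfspace adj Y (rv e)" if "x \<notin> A" "x \<in> Y" for x
    using half_cover[OF e that(2)] that(1) unfolding A_def by blast
  show ?thesis
  proof (cases "P N1 b \<in> A")
    case True
    have nBneg: "nB \<le> - N1"
    proof (rule ccontr)
      assume "\<not> nB \<le> - N1"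
      then have "N1 \<le> nB" using nB(1) by arith
      then have "P nB b \<in> A" using up[of nB] True by simp
      then show False using disj nB(2) by blast
    qed
    have "P nB b \<notin> A" using disj nB(2) by blast
    then have nA': "P (- N1) b \<notin> A" using down[of nB] nBneg by simp
    have "\<forall>n. n \<le> - N1 \<longrightarrow> P n b \<in> halfspace adj Y (rv e)"
    proof (intro allI impI)
      fix n assume "n \<le> - N1"
      then have "P n b \<notin> A" using down[of n] nA' by simp
      then show "P n b \<in> halfspace adj Y (rv e)" using cov Pb by blast
    qed
    moreover have "\<forall>n. N1 \<le> n \<longrightarrow> P n b \<in> halfspace adj Y e"
    proof (intro allI impI)
      fix n assume "N1 \<le> n"
      then show "P n b \<in> halfspace adj Y e" using up[of n] True unfolding A_def by simp
    qed
    ultimately show ?thesis using e by blast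
  next
    case False
    have nAneg: "nA \<le> - N1"
    proof (rule ccontr)
      assume "\<not> nA \<le> - N1"
      then have "N1 \<le> nA" using nA(1) by arith
      then have "P nA b \<notin> A" using up[of nA] False by simp
      then show False using nA(2) by blast
    qed
    have nA': "P (- N1) b \<in> A" using down[of nA] nAneg nA(2) by simp
    have "\<forall>n. n \<le> - N1 \<longrightarrow> P n b \<in> halfspace adj Y (rv (rv e))"
    proof (intro allI impI)
      fix n assume "n \<le> - N1"
      then show "P n b \<in> halfspace adj Y (rv (rv e))" using down[of n] nA' unfolding A_def by simp
    qed
    moreover have "\<forall>n. N1 \<le> n \<longrightarrow> P n b \<in> halfspace adj Y (rv e)"
    proof (intro allI impI)
      fix n assume "N1 \<le> n"
      then have "P n b \<notin> A" using up[of n] False by simp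
      then show "P n b \<in> halfspace adj Y (rv e)" using cov Pb by blast
    qed
    ultimately show ?thesis using re cls_rv[OF e] by blast
  qed
qed

lemma core:
  fixes N1 :: int and R0 Dn :: nat and b :: 'v and d' :: int
  assumes b: "b \<in> Y" and hb: "\<forall>n. d b (P n b) = d x0 (P n x0)"
    and DH: "\<forall>H\<in>hyperplanes adj Y. \<not> trivial_hyp adj Y H \<longrightarrow> (\<forall>c\<in>carrier H. \<forall>c'\<in>carrier H. d c c' \<le> Dn)"
    and e: "e \<in> edges_in adj Y"
    and Cb: "\<forall>c\<in>carrier (cls Y e). d b c \<le> R0"
    and up: "\<forall>n. N1 \<le> n \<longrightarrow> P n b \<in> halfspace adj Y e"
    and down: "\<forall>n. n \<le> - N1 \<longrightarrow> P n b \<in> halfspace adj Y (rv e)"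
    and dd: "N1 \<le> d'" "0 \<le> d'" and big: "6 * R0 + Dn < d x0 (P d' x0)"
  shows "\<not> hyp_intersect adj Y (cls Y e) (hyp_image (P d') (cls Y e)) \<and>
    (\<forall>H''\<in>hyperplanes adj Y. crosses adj Y H'' (cls Y e) \<and> crosses adj Y H'' (hyp_image (P d') (cls Y e))
      \<longrightarrow> trivial_hyp adj Y H'')"
proof -
  define g where "g = P d'"
  define e' where "e' = map_prod g g e"
  define C where "C = carrier (cls Y e)"
  have gaut: "graph_aut adj g" unfolding g_def by (rule P_aut)
  have gY: "g ` Y = Y" unfolding g_def by (rule P_Y)
  have e'E: "e' \<in> edges_in adj Y" unfolding e'_def by (rule edges_image[OF gaut gY e])
  have H'eq: "hyp_image g (cls Y e) = cls Y e'" unfolding e'_def by (rule cls_image[OF gaut gY])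
  have C'eq: "carrier (cls Y e') = g ` C" unfolding C_def H'eq[symmetric] by (rule carrier_image)
  have rve': "rv e' = map_prod g g (rv e)" unfolding e'_def rv_def by (cases e) simp
  have hs_rve': "halfspace adj Y (rv e') = g ` halfspace adj Y (rv e)"
    unfolding rve' by (rule halfspace_image[OF gaut gY])
  have gd: "d (g x) (g y) = d x y" for x y unfolding g_def by (rule P_d)
  have delta: "d b (g b) = d x0 (P d' x0)" unfolding g_def using hb by blast
  have F1: "R0 < d b c'" if c': "c' \<in> carrier (cls Y e')" for c'
  proof -
    obtain c1 where c1: "c' = g c1" "c1 \<in> C" using c' unfolding C'eq by (rule imageE)
    have "d b (g b) \<le> d b c' + d c' (g b)" by (rule d_tri)
    moreover have "d c' (g b) = d c1 b" using c1(1) gd by simp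
    moreover have "d c1 b = d b c1" by (rule d_sym)
    moreover have "d b c1 \<le> R0" using Cb c1(2) unfolding C_def by blast
    ultimately show ?thesis using delta big by linarith
  qed
  have F2: "R0 < d (g b) c" if c: "c \<in> C" for c
  proof -
    have "d b (g b) \<le> d b c + d c (g b)" by (rule d_tri)
    moreover have "d c (g b) = d (g b) c" by (rule d_sym)
    moreover have "d b c \<le> R0" using Cb c unfolding C_def by blast
    ultimately show ?thesis using delta big by linarith
  qed
  have gbA: "g b \<in> halfspace adj Y e" unfolding g_def using up dd(1) by blast
  have Ca: "c' \<in> halfspace adj Y e" if c': "c' \<in> carrier (cls Y e')" for c'
  proof (rule ccontr)
    assume nA: "c' \<notin> halfspace adj Y e"
    have c'Y: "c' \<in> Y" using c' carrier_cls_sub by blast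
    have "c' \<in> halfspace adj Y (rv e)" using half_cover[OF e c'Y] nA by blast
    then obtain c where c: "c \<in> carrier (cls Y e)" "c \<in> interval adj (g b) c'"
      using cross_Y[OF Yc e gbA] by blast
    obtain c1 where c1: "c' = g c1" "c1 \<in> C" using c' unfolding C'eq by (rule imageE)
    have "d (g b) c \<le> d (g b) c'" using c(2) unfolding interval_def by simp
    also have "\<dots> = d b c1" using c1(1) gd by simp
    also have "\<dots> \<le> R0" using Cb c1(2) unfolding C_def by blast
    finally show False using F2[of c] c(1) unfolding C_def by simp
  qed
  have c0: "fst e \<in> C" unfolding C_def by (rule carrier_cls_mem[OF e])
  have neq: "cls Y e \<noteq> cls Y e'"
  proof
    assume eq: "cls Y e = cls Y e'"
    have "fst e \<in> carrier (cls Y e')" using c0 eq unfolding C_def by simp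
    then have "R0 < d b (fst e)" by (rule F1)
    moreover have "d b (fst e) \<le> R0" using Cb c0 unfolding C_def by blast
    ultimately show False by simp
  qed
  have ncr: "\<not> crosses adj Y (cls Y e) (cls Y e')"
  proof
    assume cr: "crosses adj Y (cls Y e) (cls Y e')"
    have "halfspace adj Y (rv e) \<inter> halfspace adj Y e' \<noteq> {}" using crossesD(3)[OF e e'E cr] .
    then obtain z where z: "z \<in> halfspace adj Y (rv e)" "z \<in> halfspace adj Y e'" by blast
    define q where "q = P (- N1) b"
    have qA': "q \<in> halfspace adj Y (rv e)" unfolding q_def using down by simp
    have "P (- N1 - d') b \<in> halfspace adj Y (rv e)" using down dd by simp
    moreover have "g (P (- N1 - d') b) = q" unfolding g_def q_def using P_add[of d' "- N1 - d'" b] by simp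
    ultimately have "q \<in> halfspace adj Y (rv e')" unfolding hs_rve' by (metis imageI)
    then obtain c' where c': "c' \<in> carrier (cls Y e')" "c' \<in> interval adj z q"
      using cross_Y[OF Yc e'E z(2)] by blast
    have "c' \<in> halfspace adj Y (rv e)" using half_convex[OF Yc rv_edges[OF e] z(1) qA' c'(2)] .
    moreover have "c' \<in> halfspace adj Y e" using Ca[OF c'(1)] .
    ultimately show False using half_disj[OF e] by blast
  qed
  have part_i: "\<not> hyp_intersect adj Y (cls Y e) (hyp_image (P d') (cls Y e))"
    unfolding hyp_intersect_def g_def[symmetric] H'eq using neq ncr by blast
  have part_iii: "trivial_hyp adj Y H''"
    if H'': "H'' \<in> hyperplanes adj Y" and cr1: "crosses adj Y H'' (cls Y e)"
      and cr2: "crosses adj Y H'' (hyp_image (P d') (cls Y e))" for H''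
  proof (rule ccontr)
    assume nt: "\<not> trivial_hyp adj Y H''"
    obtain e'' where e'': "e'' \<in> edges_in adj Y" "H'' = cls Y e''" using H'' hyperplanes_iff by blast
    have cr2': "crosses adj Y (cls Y e'') (cls Y e')" using cr2 e''(2) H'eq unfolding g_def by simp
    have cr1': "crosses adj Y (cls Y e'') (cls Y e)" using cr1 e''(2) by simp
    obtain c1 c2 c'' where cc: "c1 \<in> C" "c2 \<in> C" "c'' \<in> carrier H''" "d c1 c'' \<le> d c1 c2"
      using cross_carriers[OF e''(1) e cr1'] e''(2) unfolding C_def by blast
    obtain c3 c4 c''' where cc': "c3 \<in> carrier (cls Y e')" "c4 \<in> carrier (cls Y e')"
      "c''' \<in> carrier H''" "d c3 c''' \<le> d c3 c4"
      using cross_carriers[OF e''(1) e'E cr2'] e''(2) by blast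
    have bc1: "d b c1 \<le> R0" "d b c2 \<le> R0" using Cb cc(1,2) unfolding C_def by auto
    have "d c1 c2 \<le> d c1 b + d b c2" by (rule d_tri)
    moreover have "d b c'' \<le> d b c1 + d c1 c''" by (rule d_tri)
    moreover have "d c1 b = d b c1" by (rule d_sym)
    ultimately have A1: "d b c'' \<le> 3 * R0" using bc1 cc(4) by linarith
    obtain a3 where a3: "c3 = g a3" "a3 \<in> C" using cc'(1) unfolding C'eq by (rule imageE)
    obtain a4 where a4: "c4 = g a4" "a4 \<in> C" using cc'(2) unfolding C'eq by (rule imageE)
    have bc3: "d (g b) c3 \<le> R0" "d (g b) c4 \<le> R0"
      using Cb a3 a4 gd unfolding C_def by auto
    have "d c3 c4 \<le> d c3 (g b) + d (g b) c4" by (rule d_tri)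
    moreover have "d (g b) c''' \<le> d (g b) c3 + d c3 c'''" by (rule d_tri)
    moreover have "d c3 (g b) = d (g b) c3" by (rule d_sym)
    ultimately have A2: "d (g b) c''' \<le> 3 * R0" using bc3 cc'(4) by linarith
    have "d c'' c''' \<le> Dn" using DH H'' nt cc(3) cc'(3) by blast
    moreover have "d b (g b) \<le> d b c'' + d c'' (g b)" by (rule d_tri)
    moreover have "d c'' (g b) \<le> d c'' c''' + d c''' (g b)" by (rule d_tri)
    moreover have "d c''' (g b) = d (g b) c'''" by (rule d_sym)
    ultimately show False using A1 A2 delta big by linarith
  qed
  show ?thesis using part_i part_iii by blast
qed


end

context ql
begin

lemma part3:
  fixes Dn :: nat
  assumes DH: "\<forall>H\<in>hyperplanes adj Y. \<not> trivial_hyp adj Y H \<longrightarrow> (\<forall>c\<in>carrier H. \<forall>c'\<in>carrier H. d c c' \<le> Dn)"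
  shows "\<exists>d0::int. \<forall>d'\<ge>d0. \<forall>H\<in>hyperplanes adj Y. essential_hyp adj Y H \<longrightarrow>
        \<not> hyp_intersect adj Y H (hyp_image (P d') H) \<and>
        (\<forall>H''\<in>hyperplanes adj Y.
            crosses adj Y H'' H \<and> crosses adj Y H'' (hyp_image (P d') H)
            \<longrightarrow> trivial_hyp adj Y H'')"
proof -
  define R0 where "R0 = rr + Dn"
  obtain N1 where N1: "0 \<le> N1" "\<forall>n. N1 \<le> \<bar>n\<bar> \<longrightarrow> R0 + d x0 (P 1 x0) < d x0 (P n x0)"
    using div[of "R0 + d x0 (P 1 x0)"] by blast
  obtain M1 where M1: "\<forall>n. \<bar>n\<bar> < N1 \<longrightarrow> d x0 (P n x0) \<le> M1" using small by blast
  obtain N2 where N2: "0 \<le> N2" "\<forall>n. N2 \<le> \<bar>n\<bar> \<longrightarrow> 6 * R0 + Dn < d x0 (P n x0)"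
    using div[of "6 * R0 + Dn"] by blast
  show ?thesis
  proof (intro exI[of _ "N1 + N2"] allI impI ballI)
    fix d' H assume dd: "N1 + N2 \<le> d'" and H: "H \<in> hyperplanes adj Y" and ess: "essential_hyp adj Y H"
    obtain e where e: "e \<in> edges_in adj Y" "H = cls Y e" using H hyperplanes_iff by blast
    have hs: "halfspace adj Y e \<in> halfspaces adj Y H" using halfspaces_cls[OF e(1)] e(2) by simp
    have nt: "\<not> trivial_hyp adj Y H"
      using ess hs unfolding essential_hyp_def trivial_hyp_def by blast
    have c0: "fst e \<in> carrier H" using carrier_cls_mem[OF e(1)] e(2) by simp
    have "fst e \<in> Y" using edges_inD[OF e(1)] by blast
    then obtain k where k: "d (fst e) (P k x0) \<le> rr" using near by blast
    define b where "b = P k x0"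
    have b: "b \<in> Y" unfolding b_def using P_mem x0Y by blast
    have Cb: "\<forall>c\<in>carrier (cls Y e). d b c \<le> R0"
    proof
      fix c assume "c \<in> carrier (cls Y e)"
      then have c: "c \<in> carrier H" using e(2) by simp
      have "d b c \<le> d b (fst e) + d (fst e) c" by (rule d_tri)
      moreover have "d b (fst e) = d (fst e) b" by (rule d_sym)
      moreover have "d (fst e) c \<le> Dn" using DH H nt c0 c by blast
      ultimately show "d b c \<le> R0" using k unfolding R0_def b_def by linarith
    qed
    have hb: "\<forall>n. d b (P n b) = d x0 (P n x0)" unfolding b_def using delta_b by blast
    have nb: "\<forall>y\<in>Y. \<exists>n. d y (P n b) \<le> rr" unfolding b_def using near_b by blast
    have ess': "essential_hyp adj Y (cls Y e)" using ess e(2) by simp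
    obtain ep where ep: "ep \<in> edges_in adj Y" "cls Y ep = cls Y e"
      "\<forall>n. N1 \<le> n \<longrightarrow> P n b \<in> halfspace adj Y ep" "\<forall>n. n \<le> - N1 \<longrightarrow> P n b \<in> halfspace adj Y (rv ep)"
      using orient[OF b hb nb N1(1) N1(2) M1 e(1) ess' Cb] by blast
    have Cb': "\<forall>c\<in>carrier (cls Y ep). d b c \<le> R0" using Cb ep(2) by simp
    have dd1: "N1 \<le> d'" "0 \<le> d'" using dd N1(1) N2(1) by auto
    have big: "6 * R0 + Dn < d x0 (P d' x0)" using N2(2) dd N1(1) by auto
    have "\<not> hyp_intersect adj Y (cls Y ep) (hyp_image (P d') (cls Y ep)) \<and>
      (\<forall>H''\<in>hyperplanes adj Y. crosses adj Y H'' (cls Y ep) \<and> crosses adj Y H'' (hyp_image (P d') (cls Y ep))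
        \<longrightarrow> trivial_hyp adj Y H'')"
      by (rule core[OF b hb DH ep(1) Cb' ep(3) ep(4) dd1 big])
    then show "\<not> hyp_intersect adj Y H (hyp_image (P d') H) \<and>
        (\<forall>H''\<in>hyperplanes adj Y.
            crosses adj Y H'' H \<and> crosses adj Y H'' (hyp_image (P d') H)
            \<longrightarrow> trivial_hyp adj Y H'')" using ep(2) e(2) by simp
  qed
qed

end

theorem lemma5p6:
  fixes adj :: "'v \<Rightarrow> 'v \<Rightarrow> bool" and G :: "('v \<Rightarrow> 'v) set"
    and Y :: "'v set" and \<phi> :: "'v \<Rightarrow> 'v"
  assumes "univ_cover_of_compact_npc adj G"
    and "quasiline adj G Y \<phi>"
  shows "\<exists>(D::real) (K::real) (d::int).
    (\<forall>D'\<ge>D. \<forall>H\<in>hyperplanes adj Y.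
        \<not> trivial_hyp adj Y H \<longrightarrow> diam_le adj (carrier H) D') \<and>
    (\<forall>K'\<ge>K. \<forall>H\<in>hyperplanes adj Y. half_essential_hyp adj Y H \<longrightarrow>
        (\<forall>W\<in>halfspaces adj Y H. \<not> deep adj W H \<longrightarrow> diam_le adj W K')) \<and>
    (\<forall>d'\<ge>d. \<forall>H\<in>hyperplanes adj Y. essential_hyp adj Y H \<longrightarrow>
        \<not> hyp_intersect adj Y H (hyp_image (fpow \<phi> d') H) \<and>
        (\<forall>H''\<in>hyperplanes adj Y.
            crosses adj Y H'' H \<and> crosses adj Y H'' (hyp_image (fpow \<phi> d') H)
            \<longrightarrow> trivial_hyp adj Y H'')) \<and>
    finite {H \<in> hyperplanes adj Y. trivial_hyp adj Y H}"
proof (cases "Y = {}")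
  case True
  then have "hyperplanes adj Y = {}" unfolding hyperplanes_def edges_in_def by simp
  then show ?thesis by simp
next
  case False
  then obtain x0 where x0: "x0 \<in> Y" by blast
  have u: "median_graph adj" "locally_finite adj" "aut_group adj G" "acts_freely G"
    using assms(1) unfolding univ_cover_of_compact_npc_def by auto
  have q: "convex_set adj Y" "\<phi> \<in> G" "\<phi> \<noteq> id" "\<phi> ` Y = Y" "finitely_many_orbits (cyclic_subgroup \<phi>) Y"
    using assms(2) unfolding quasiline_def by auto
  interpret ql adj G Y \<phi> x0
    using u q x0 by unfold_locales auto
  obtain Dn where Dn: "\<forall>H\<in>hyperplanes adj Y. \<not> trivial_hyp adj Y H \<longrightarrow>
      (\<forall>c\<in>carrier H. \<forall>c'\<in>carrier H. gdist adj c c' \<le> Dn)" using part1 by blast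
  obtain Kn where Kn: "\<forall>H\<in>hyperplanes adj Y. half_essential_hyp adj Y H \<longrightarrow>
      (\<forall>W\<in>halfspaces adj Y H. \<not> deep adj W H \<longrightarrow> (\<forall>z\<in>W. \<forall>z'\<in>W. gdist adj z z' \<le> Kn))"
    using part2 by blast
  obtain d0 where d0: "\<forall>d'\<ge>d0. \<forall>H\<in>hyperplanes adj Y. essential_hyp adj Y H \<longrightarrow>
        \<not> hyp_intersect adj Y H (hyp_image (fpow \<phi> d') H) \<and>
        (\<forall>H''\<in>hyperplanes adj Y.
            crosses adj Y H'' H \<and> crosses adj Y H'' (hyp_image (fpow \<phi> d') H)
            \<longrightarrow> trivial_hyp adj Y H'')" using part3[OF Dn] by blast
  have p1: "\<forall>D'\<ge>real Dn. \<forall>H\<in>hyperplanes adj Y.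
        \<not> trivial_hyp adj Y H \<longrightarrow> diam_le adj (carrier H) D'"
  proof (intro allI impI ballI)
    fix D' H assume D': "real Dn \<le> D'" and H: "H \<in> hyperplanes adj Y" and nt: "\<not> trivial_hyp adj Y H"
    show "diam_le adj (carrier H) D'" unfolding diam_le_def
    proof (intro ballI)
      fix x y assume "x \<in> carrier H" "y \<in> carrier H"
      then have "gdist adj x y \<le> Dn" using Dn H nt by blast
      then show "real (gdist adj x y) \<le> D'" using D' by linarith
    qed
  qed
  have p2: "\<forall>K'\<ge>real Kn. \<forall>H\<in>hyperplanes adj Y. half_essential_hyp adj Y H \<longrightarrow>
        (\<forall>W\<in>halfspaces adj Y H. \<not> deep adj W H \<longrightarrow> diam_le adj W K')"
  proof (intro allI impI ballI)
    fix K' H W assume K': "real Kn \<le> K'" and H: "H \<in> hyperplanes adj Y" and he: "half_essential_hyp adj Y H"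
      and W: "W \<in> halfspaces adj Y H" and nd: "\<not> deep adj W H"
    show "diam_le adj W K'" unfolding diam_le_def
    proof (intro ballI)
      fix x y assume "x \<in> W" "y \<in> W"
      then have "gdist adj x y \<le> Kn" using Kn H he W nd by blast
      then show "real (gdist adj x y) \<le> K'" using K' by linarith
    qed
  qed
  show ?thesis using p1 p2 d0 part4 by blast
qed


end
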